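(* Let $\alpha$ be an irrational Liouvillean number. Then there exists a mean-zero function $Q\in C^{\infty}(\mathbb{S}^1)$ such that the homology equation $$R(\xi+\alpha)-R(\xi)=Q(\xi)$$ has a measurable solution $R:\mathbb{S}^1\to\mathbb{R}$ with $R\in H^1(\mathbb{S}^1)$ but $R\notin H^2(\mathbb{S}^1)$. In addition, for every $\lambda\in\mathbb{R}\setminus\{0\}$, the function $R_\lambda(\xi)=e^{i\lambda R(\xi)}$ belongs to $H^1(\mathbb{S}^1)$ but not to $H^2(\mathbb{S}^1)$.
   Context: $\mathbb{S}^1=[-\tfrac12,\tfrac12]$ with endpoints identified (the one-dimensional circle), addition taken mod 1. A real number $\alpha$ is $\beta$-Diophantine if there is a constant $C>0$ with $\inf_{p\in\mathbb{Z}}|\alpha k+p|\geq C/|k|^{1+\beta}$ for all $k\in\mathbb{Z}\setminus\{0\}$; $\alpha$ is Liouvillean if it is not $\beta$-Diophantine for any $\beta>0$. *)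

theory Defs
  imports "HOL-Analysis.Analysis"
begin

text \<open>The circle S^1 = R/Z; functions on S^1 are 1-periodic functions on R.\<close>

definition periodic1 :: "(real \<Rightarrow> 'a) \<Rightarrow> bool" where
  "periodic1 f \<longleftrightarrow> (\<forall>x. f (x + 1) = f x)"

definition diophantine :: "real \<Rightarrow> real \<Rightarrow> bool" where
  "diophantine \<alpha> \<beta> \<longleftrightarrow>
     (\<exists>C>0. \<forall>k::int. k \<noteq> 0 \<longrightarrow>
        (INF p::int. \<bar>\<alpha> * of_int k + of_int p\<bar>) \<ge> C / (real_of_int \<bar>k\<bar>) powr (1 + \<beta>))"

definition liouvillean :: "real \<Rightarrow> bool" where
  "liouvillean \<alpha> \<longleftrightarrow> \<not> (\<exists>\<beta>>0. diophantine \<alpha> \<beta>)"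

definition smooth_circle :: "(real \<Rightarrow> real) \<Rightarrow> bool" where
  "smooth_circle f \<longleftrightarrow> periodic1 f \<and>
     (\<exists>D :: nat \<Rightarrow> real \<Rightarrow> real. D 0 = f \<and>
        (\<forall>n x. (D n has_real_derivative D (Suc n) x) (at x)))"

definition mean_zero :: "(real \<Rightarrow> real) \<Rightarrow> bool" where
  "mean_zero f \<longleftrightarrow> (LINT x:{0..1}|lborel. f x) = 0"

definition fourier_coeff :: "(real \<Rightarrow> complex) \<Rightarrow> int \<Rightarrow> complex" where
  "fourier_coeff f k =
     (LINT x:{0..1}|lborel. f x * exp (- (2 * of_real pi * \<i> * of_int k * of_real x)))"

definition sobolev :: "nat \<Rightarrow> (real \<Rightarrow> complex) \<Rightarrow> bool" where
  "sobolev s f \<longleftrightarrow> periodic1 f \<and> f \<in> borel_measurable lborel \<and>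
     set_integrable lborel {0..1} (\<lambda>x. (norm (f x))\<^sup>2) \<and>
     (\<lambda>k::int. (1 + (real_of_int k)\<^sup>2) ^ s * (norm (fourier_coeff f k))\<^sup>2) summable_on UNIV"

end

theory Submission
  imports Defs
begin

definition ee :: "int \<Rightarrow> real \<Rightarrow> complex" where
  "ee k x = exp (2 * of_real pi * \<i> * of_int k * of_real x)"

lemma ee_add: "ee k (x + y) = ee k x * ee k y"
proof -
  have "2 * of_real pi * \<i> * of_int k * of_real (x + y) =
        2 * of_real pi * \<i> * of_int k * of_real x + 2 * of_real pi * \<i> * of_int k * (of_real y :: complex)"
    by (simp add: algebra_simps)
  then show ?thesis unfolding ee_def by (simp only: exp_add)
qed

lemma ee_mult: "ee k x * ee l x = ee (k + l) x"
proof -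
  have "2 * of_real pi * \<i> * of_int k * of_real x + 2 * of_real pi * \<i> * of_int l * of_real x
      = 2 * of_real pi * \<i> * of_int (k + l) * (of_real x :: complex)" by (simp add: algebra_simps)
  then show ?thesis unfolding ee_def by (simp only: exp_add[symmetric])
qed

lemma ee_zero [simp]: "ee 0 x = 1" "ee k 0 = 1"
  unfolding ee_def by simp_all

lemma ee_int: "ee k (of_int n) = 1"
  unfolding ee_def exp_eq_1 by (auto intro!: exI[of _ "k * n"] simp: algebra_simps)

lemma ee_one [simp]: "ee k 1 = 1"
  using ee_int[of k 1] by simp

lemma ee_periodic: "ee k (x + 1) = ee k x"
  by (simp add: ee_add)

lemma norm_ee [simp]: "cmod (ee k x) = 1"
  unfolding ee_def by (simp add: norm_exp_eq_Re)

lemma cnj_ee: "cnj (ee k x) = ee (-k) x"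
  unfolding ee_def by (simp add: exp_cnj)

lemma ee_times_cnj: "ee k x * cnj (ee k x) = 1"
  by (simp add: cnj_ee ee_mult)

lemma ee_deriv: "(ee k has_vector_derivative (2 * of_real pi * \<i> * of_int k) * ee k x) (at x within S)"
proof -
  have "((\<lambda>z. exp (2 * of_real pi * \<i> * of_int k * z)) has_field_derivative
          exp (2 * of_real pi * \<i> * of_int k * of_real x) * (2 * of_real pi * \<i> * of_int k)) (at (of_real x))"
    by (auto intro!: derivative_eq_intros)
  from has_vector_derivative_real_field[OF this, of S] show ?thesis
    unfolding ee_def by (simp add: mult.commute)
qed

lemma continuous_ee [continuous_intros]: "continuous_on S (ee k)"
  unfolding ee_def by (intro continuous_intros)

lemma continuous_ee' [continuous_intros]: "continuous_on S f \<Longrightarrow> continuous_on S (\<lambda>x. ee k (f x))"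
  unfolding ee_def by (intro continuous_intros)

lemma has_integral_ee: "(ee m has_integral (if m = 0 then 1 else 0)) {0..1}"
proof (cases "m = 0")
  case True
  have "ee 0 = (\<lambda>x. 1)" by (rule ext) simp
  then show ?thesis using True has_integral_const_real[of "1::complex" 0 1] by simp
next
  case False
  define c where "c = 2 * of_real pi * \<i> * of_int m"
  have c0: "c \<noteq> 0" using False by (simp add: c_def)
  have "((\<lambda>x. ee m x / c) has_vector_derivative ee m x) (at x within {0..1})" for x
    using ee_deriv[of m x "{0..1}"] c0
    by (auto intro!: derivative_eq_intros simp: c_def field_simps)
  from fundamental_theorem_of_calculus[OF _ this] have "(ee m has_integral (ee m 1 / c - ee m 0 / c)) {0..1}"
    by simp
  then show ?thesis using False by simp
qed

lemma integral_ee: "integral {0..1} (ee m) = (if m = 0 then 1 else 0)"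
  using has_integral_ee integral_unique by blast

lemma integral_ee_ortho: "integral {0..1} (\<lambda>x. ee k x * ee (-l) x) = (if k = l then 1 else 0)"
  by (simp add: ee_mult integral_ee)

lemma fc_exp_eq: "exp (- (2 * of_real pi * \<i> * of_int k * of_real x)) = ee (-k) x"
  unfolding ee_def by simp

lemma fourier_coeff_integral:
  assumes "continuous_on {0..1} f"
  shows "fourier_coeff f k = integral {0..1} (\<lambda>x. f x * ee (-k) x)"
proof -
  have c: "continuous_on {0..1} (\<lambda>x. f x * ee (-k) x)"
    by (intro continuous_intros assms)
  have "set_integrable lborel {0..1} (\<lambda>x. f x * ee (-k) x)"
    unfolding set_integrable_def using borel_integrable_compact[OF _ c] by simp
  from set_borel_integral_eq_integral(2)[OF this] show ?thesis
    unfolding fourier_coeff_def fc_exp_eq by simp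
qed

lemma periodic_nat: "periodic1 f \<Longrightarrow> f (x + of_nat n) = f x"
proof (induction n arbitrary: x)
  case (Suc n)
  then show ?case unfolding periodic1_def
    by (metis add.assoc of_nat_Suc add.commute)
qed simp

lemma periodic_int: assumes "periodic1 f" shows "f (x + of_int n) = f x"
proof (cases "n \<ge> 0")
  case True
  then show ?thesis using periodic_nat[OF assms, of x "nat n"] by simp
next
  case False
  have "f (x + of_int n + of_nat (nat (-n))) = f (x + of_int n)"
    by (rule periodic_nat[OF assms])
  then show ?thesis using False by simp
qed

lemma periodic_shift_integral:
  fixes w :: "real \<Rightarrow> 'a::euclidean_space"
  assumes cont: "continuous_on UNIV w" and per: "periodic1 w"
  shows "integral {0..1} (\<lambda>x. w (x + h)) = integral {0..1} w"
proof -
  have int: "w integrable_on {a..b}" for a b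
    by (rule integrable_continuous_interval) (use cont continuous_on_subset in blast)
  define n where "n = floor h"
  define t where "t = h - of_int n"
  have t: "0 \<le> t" "t \<le> 1" unfolding t_def n_def by linarith+
  have "integral {0..1} (\<lambda>x. w (x + h)) = integral {0..1} (w \<circ> (+) h)"
    by (simp add: o_def add.commute)
  also have "\<dots> = integral {h..1 + h} w"
    by (simp add: integral_shift_Icc_real add.commute)
  also have "\<dots> = integral {t + of_int n..1 + t + of_int n} w"
    by (simp add: t_def)
  also have "\<dots> = integral {t..1 + t} (w \<circ> (+) (of_int n))"
    by (simp add: integral_shift_Icc_real)
  also have "(w \<circ> (+) (of_int n)) = w"
    using periodic_int[OF per] by (auto simp: o_def add.commute)
  also have "integral {t..1 + t} w = integral {t..1} w + integral {1..1 + t} w"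
    using Henstock_Kurzweil_Integration.integral_combine[where a=t and c=1 and b="1+t" and f=w] int t by simp
  also have "integral {1..1 + t} w = integral {0..t} (w \<circ> (+) 1)"
    by (simp add: integral_shift_Icc_real add.commute)
  also have "(w \<circ> (+) 1) = w"
    using per unfolding periodic1_def by (auto simp: o_def add.commute)
  also have "integral {t..1} w + integral {0..t} w = integral {0..1} w"
    using Henstock_Kurzweil_Integration.integral_combine[where a=0 and c=t and b=1 and f=w] int t by (simp add: add.commute)
  finally show ?thesis .
qed

definition fc :: "(real \<Rightarrow> complex) \<Rightarrow> int \<Rightarrow> complex" where
  "fc u k = integral {0..1} (\<lambda>x. u x * ee (-k) x)"

lemma fourier_coeff_fc: "continuous_on {0..1} u \<Longrightarrow> fourier_coeff u k = fc u k"
  by (simp add: fourier_coeff_integral fc_def)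

lemma int01: fixes g :: "real \<Rightarrow> 'a::banach"
  shows "continuous_on {0..1} g \<Longrightarrow> g integrable_on {0..1}"
  by (simp add: integrable_continuous_real)

lemma ofr_cmod_sq': "(complex_of_real (cmod z))\<^sup>2 = cnj z * z"
  using complex_norm_square[of z] by (simp add: mult.commute)

lemma ofr_cmod_sq: "(complex_of_real (cmod z))\<^sup>2 = z * cnj z"
  using complex_norm_square[of z] by simp

declare cnj_ee [simp]

lemma integral_cnj01:
  assumes "g integrable_on S"
  shows "integral S (\<lambda>x. cnj (g x)) = cnj (integral S g)"
  using integral_linear[OF assms bounded_linear_cnj] by (simp add: o_def)

lemma integral_of_real01:
  assumes "g integrable_on S"
  shows "integral S (\<lambda>x. complex_of_real (g x)) = complex_of_real (integral S g)"
  using integral_linear[OF assms bounded_linear_of_real] by (simp add: o_def)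

lemma integral_sum01:
  fixes g :: "int \<Rightarrow> real \<Rightarrow> complex"
  assumes "finite K" "\<And>k. k \<in> K \<Longrightarrow> continuous_on {0..1} (g k)"
  shows "integral {0..1} (\<lambda>x. \<Sum>k\<in>K. g k x) = (\<Sum>k\<in>K. integral {0..1} (g k))"
  using assms by (intro integral_sum) (auto intro: int01)

lemma cnj_sum_ee: "cnj (\<Sum>k\<in>K. c k * ee k x) = (\<Sum>k\<in>K. cnj (c k) * ee (-k) x)"
  by (simp add: cnj_ee)

lemma integral_mult_cnj_sum:
  assumes "continuous_on {0..1} u" "finite K"
  shows "integral {0..1} (\<lambda>x. u x * cnj (\<Sum>k\<in>K. c k * ee k x)) = (\<Sum>k\<in>K. cnj (c k) * fc u k)"
proof -
  have "integral {0..1} (\<lambda>x. u x * cnj (\<Sum>k\<in>K. c k * ee k x))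
      = integral {0..1} (\<lambda>x. \<Sum>k\<in>K. cnj (c k) * (u x * ee (-k) x))"
    by (intro arg_cong[where f="integral _"] ext) (simp add: sum_distrib_left algebra_simps)
  also have "\<dots> = (\<Sum>k\<in>K. integral {0..1} (\<lambda>x. cnj (c k) * (u x * ee (-k) x)))"
    by (rule integral_sum01) (use assms in \<open>auto intro!: continuous_intros\<close>)
  also have "\<dots> = (\<Sum>k\<in>K. cnj (c k) * fc u k)"
    unfolding fc_def by (intro sum.cong refl integral_mult_right)
  finally show ?thesis .
qed

lemma continuous_sum_ee [continuous_intros]: "continuous_on S (\<lambda>x. \<Sum>k\<in>K. c k * ee k x)"
  by (intro continuous_intros)

lemma fc_sum_ee:
  assumes "finite K"
  shows "fc (\<lambda>x. \<Sum>k\<in>K. c k * ee k x) l = (if l \<in> K then c l else 0)"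
proof -
  have "fc (\<lambda>x. \<Sum>k\<in>K. c k * ee k x) l = integral {0..1} (\<lambda>x. \<Sum>k\<in>K. c k * (ee k x * ee (-l) x))"
    unfolding fc_def by (intro arg_cong[where f="integral _"] ext) (simp add: sum_distrib_left algebra_simps)
  also have "\<dots> = (\<Sum>k\<in>K. integral {0..1} (\<lambda>x. c k * (ee k x * ee (-l) x)))"
    by (rule integral_sum01) (use assms in \<open>auto intro!: continuous_intros\<close>)
  also have "\<dots> = (\<Sum>k\<in>K. c k * (if k = l then 1 else 0))"
    by (intro sum.cong refl) (simp add: integral_ee_ortho)
  also have "\<dots> = (if l \<in> K then c l else 0)"
    using assms by (simp add: if_distrib sum.delta' cong: if_cong)
  finally show ?thesis .
qed

lemma integral_norm_sq:
  fixes u :: "real \<Rightarrow> complex"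
  assumes "continuous_on {0..1} u"
  shows "complex_of_real (integral {0..1} (\<lambda>x. (cmod (u x))\<^sup>2)) = integral {0..1} (\<lambda>x. u x * cnj (u x))"
proof -
  have c: "continuous_on {0..1} (\<lambda>x. (cmod (u x))\<^sup>2)" by (intro continuous_intros assms)
  have "complex_of_real (integral {0..1} (\<lambda>x. (cmod (u x))\<^sup>2)) =
      integral {0..1} (\<lambda>x. complex_of_real ((cmod (u x))\<^sup>2))"
    by (rule integral_of_real01[OF int01[OF c], symmetric])
  also have "\<dots> = integral {0..1} (\<lambda>x. u x * cnj (u x))"
    by (simp add: ofr_cmod_sq)
  finally show ?thesis .
qed

lemma finite_parseval:
  assumes "finite K"
  shows "integral {0..1} (\<lambda>x. (cmod (\<Sum>k\<in>K. c k * ee k x))\<^sup>2) = (\<Sum>k\<in>K. (cmod (c k))\<^sup>2)"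
proof -
  have "complex_of_real (integral {0..1} (\<lambda>x. (cmod (\<Sum>k\<in>K. c k * ee k x))\<^sup>2))
      = integral {0..1} (\<lambda>x. (\<Sum>k\<in>K. c k * ee k x) * cnj (\<Sum>k\<in>K. c k * ee k x))"
    by (rule integral_norm_sq) (intro continuous_intros)
  also have "\<dots> = (\<Sum>k\<in>K. cnj (c k) * fc (\<lambda>x. \<Sum>k\<in>K. c k * ee k x) k)"
    by (rule integral_mult_cnj_sum) (use assms in \<open>auto intro!: continuous_intros\<close>)
  also have "\<dots> = (\<Sum>k\<in>K. cnj (c k) * c k)"
    using assms by (intro sum.cong refl) (simp add: fc_sum_ee)
  also have "\<dots> = complex_of_real (\<Sum>k\<in>K. (cmod (c k))\<^sup>2)"
    by (simp add: ofr_cmod_sq mult.commute)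
  finally show ?thesis using of_real_eq_iff by blast
qed

lemma bessel:
  assumes u: "continuous_on {0..1} u" and K: "finite K"
  shows "(\<Sum>k\<in>K. (cmod (fc u k))\<^sup>2) \<le> integral {0..1} (\<lambda>x. (cmod (u x))\<^sup>2)"
proof -
  define S where "S x = (\<Sum>k\<in>K. fc u k * ee k x)" for x
  have cS: "continuous_on {0..1} S" unfolding S_def by (intro continuous_intros)
  have cd: "continuous_on {0..1} (\<lambda>x. u x - S x)" by (intro continuous_intros u cS)
  define B where "B = (\<Sum>k\<in>K. (cmod (fc u k))\<^sup>2)"
  have B: "complex_of_real B = (\<Sum>k\<in>K. cnj (fc u k) * fc u k)"
    unfolding B_def of_real_sum by (intro sum.cong refl) (metis complex_norm_square mult.commute)
  have i1: "integral {0..1} (\<lambda>x. u x * cnj (S x)) = complex_of_real B"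
    unfolding S_def B by (rule integral_mult_cnj_sum[OF u K])
  have i2: "integral {0..1} (\<lambda>x. S x * cnj (u x)) = complex_of_real B"
  proof -
    have "integral {0..1} (\<lambda>x. S x * cnj (u x)) = integral {0..1} (\<lambda>x. cnj (u x * cnj (S x)))"
      by (simp add: mult.commute)
    also have "\<dots> = cnj (integral {0..1} (\<lambda>x. u x * cnj (S x)))"
      by (rule integral_cnj01) (intro int01 continuous_intros u cS)
    finally show ?thesis using i1 by simp
  qed
  have i3: "integral {0..1} (\<lambda>x. S x * cnj (S x)) = complex_of_real B"
    using finite_parseval[OF K, of "fc u"] integral_norm_sq[OF cS] unfolding S_def B_def by simp
  have "complex_of_real (integral {0..1} (\<lambda>x. (cmod (u x - S x))\<^sup>2))
      = integral {0..1} (\<lambda>x. (u x - S x) * cnj (u x - S x))"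
    by (rule integral_norm_sq[OF cd])
  also have "\<dots> = integral {0..1} (\<lambda>x. u x * cnj (u x) - u x * cnj (S x) - S x * cnj (u x) + S x * cnj (S x))"
    by (simp add: algebra_simps)
  also have "\<dots> = integral {0..1} (\<lambda>x. u x * cnj (u x)) - integral {0..1} (\<lambda>x. u x * cnj (S x))
        - integral {0..1} (\<lambda>x. S x * cnj (u x)) + integral {0..1} (\<lambda>x. S x * cnj (S x))"
    by (subst integral_add integral_diff, (intro int01 continuous_intros u cS)+)+ simp
  also have "\<dots> = complex_of_real (integral {0..1} (\<lambda>x. (cmod (u x))\<^sup>2) - B)"
    using i1 i2 i3 integral_norm_sq[OF u] by simp
  finally have eq: "integral {0..1} (\<lambda>x. (cmod (u x - S x))\<^sup>2) = integral {0..1} (\<lambda>x. (cmod (u x))\<^sup>2) - B"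
    using of_real_eq_iff by blast
  have "0 \<le> integral {0..1} (\<lambda>x. (cmod (u x - S x))\<^sup>2)"
    by (rule integral_nonneg) (auto intro!: int01 continuous_intros cd)
  then show ?thesis using eq unfolding B_def by simp
qed

lemma sin_half_lower:
  fixes s :: real
  assumes "0 \<le> s" "s \<le> 1"
  shows "s / 2 \<le> sin s"
proof -
  have "(\<lambda>t. sin t - t / 2) 0 \<le> (\<lambda>t. sin t - t / 2) s"
  proof (rule DERIV_nonneg_imp_nondecreasing[of 0 s "\<lambda>t. sin t - t / 2"])
    show "0 \<le> s" by fact
  next
    fix x assume x: "0 \<le> x" "x \<le> s"
    have "cos 1 \<le> cos x" using x assms pi_gt3 by (intro cos_monotone_0_pi_le) auto
    moreover have "cos (pi / 3) \<le> cos 1" using pi_gt3 pi_less_4 by (intro cos_monotone_0_pi_le) auto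
    ultimately have "1 / 2 \<le> cos x" by (simp add: cos_60)
    then show "\<exists>y. ((\<lambda>t. sin t - t / 2) has_real_derivative y) (at x) \<and> 0 \<le> y"
      by (intro exI[of _ "cos x - 1 / 2"]) (auto intro!: derivative_eq_intros)
  qed
  then show ?thesis by simp
qed

lemma ee_exp_i: "ee k h = exp (\<i> * complex_of_real (2 * pi * of_int k * h))"
  unfolding ee_def by (simp add: algebra_simps)

lemma ee_minus_one_upper: "cmod (ee k h - 1) \<le> 2 * pi * \<bar>of_int k\<bar> * \<bar>h\<bar>"
proof -
  have "cmod (ee k h - 1) = 2 * \<bar>sin (2 * pi * of_int k * h / 2)\<bar>"
    unfolding ee_exp_i by (rule dist_exp_i_1)
  also have "\<dots> \<le> 2 * \<bar>2 * pi * of_int k * h / 2\<bar>"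
    using abs_sin_x_le_abs_x by simp
  finally show ?thesis by (simp add: abs_mult)
qed

lemma ee_minus_one_lower:
  assumes "\<bar>2 * pi * of_int k * h\<bar> \<le> 2"
  shows "\<bar>2 * pi * of_int k * h\<bar> / 2 \<le> cmod (ee k h - 1)"
proof -
  define s where "s = 2 * pi * of_int k * h / 2"
  have "cmod (ee k h - 1) = 2 * \<bar>sin s\<bar>"
    unfolding ee_exp_i s_def by (rule dist_exp_i_1)
  moreover have s1: "\<bar>s\<bar> \<le> 1" using assms unfolding s_def by simp
  have "\<bar>s\<bar> / 2 \<le> \<bar>sin s\<bar>"
  proof (cases "0 \<le> s")
    case True
    then show ?thesis using sin_half_lower[of s] s1 by auto
  next
    case False
    then have "- s / 2 \<le> sin (- s)" using sin_half_lower[of "-s"] s1 by auto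
    then show ?thesis using False by auto
  qed
  ultimately show ?thesis unfolding s_def by simp
qed

lemma continuous_on_deriv:
  assumes "\<And>x. (u has_vector_derivative u' x) (at x)"
  shows "continuous_on S u"
  using assms has_vector_derivative_continuous continuous_at_imp_continuous_on by blast

lemma fc_deriv:
  fixes u u' :: "real \<Rightarrow> complex"
  assumes d: "\<And>x. (u has_vector_derivative u' x) (at x)" and c': "continuous_on UNIV u'"
    and per: "periodic1 u"
  shows "fc u' k = 2 * of_real pi * \<i> * of_int k * fc u k"
proof -
  have cu: "continuous_on S u" for S by (rule continuous_on_deriv[OF d])
  define y where "y = 2 * of_real pi * \<i> * of_int k * fc u k"
  define g' where "g' x = (2 * of_real pi * \<i> * of_int (-k)) * ee (-k) x" for x
  have int: "((\<lambda>x. u x * g' x) has_integral (u 1 * ee (-k) 1 - u 0 * ee (-k) 0 - y)) {0..1}"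
  proof -
    have "((\<lambda>x. (2 * of_real pi * \<i> * of_int (-k)) * (u x * ee (-k) x)) has_integral
            (2 * of_real pi * \<i> * of_int (-k)) * fc u k) {0..1}"
      unfolding fc_def
      by (intro has_integral_mult_right integrable_integral int01 continuous_intros cu)
    moreover have "u 1 = u 0" using per unfolding periodic1_def by (metis add_0)
    ultimately show ?thesis unfolding g'_def y_def by (simp add: algebra_simps)
  qed
  have dg: "(ee (-k) has_vector_derivative g' x) (at x)" for x
    unfolding g'_def by (rule ee_deriv)
  have "((\<lambda>x. u' x * ee (-k) x) has_integral y) {0..1}"
    apply (rule integration_by_parts[OF bounded_bilinear_mult, where f=u and g="ee (-k)" and f'=u' and g'=g'])
    apply simp
    apply (rule cu)
    apply (rule continuous_ee)
    apply (rule d)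
    apply (rule dg)
    apply (rule int)
    done
  then show ?thesis unfolding fc_def y_def by (rule integral_unique)
qed

lemma fc_shift:
  fixes u :: "real \<Rightarrow> complex"
  assumes c: "continuous_on UNIV u" and per: "periodic1 u"
  shows "fc (\<lambda>x. u (x + h)) k = ee k h * fc u k"
proof -
  define w where "w y = u y * ee (-k) y" for y
  have cw: "continuous_on UNIV w" unfolding w_def by (intro continuous_intros c)
  have pw: "periodic1 w" using per unfolding w_def periodic1_def by (simp add: ee_periodic)
  have eq: "u (x + h) * ee (-k) x = ee k h * w (x + h)" for x
  proof -
    have "ee (-k) x = ee k h * ee (-k) (x + h)"
      by (simp add: ee_add ee_mult mult.assoc[symmetric] mult.commute[of "ee k h"])
    then show ?thesis unfolding w_def by simp
  qed
  have "fc (\<lambda>x. u (x + h)) k = integral {0..1} (\<lambda>x. ee k h * w (x + h))"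
    unfolding fc_def eq ..
  also have "\<dots> = ee k h * integral {0..1} (\<lambda>x. w (x + h))"
    by (rule integral_mult_right)
  also have "\<dots> = ee k h * integral {0..1} w"
    using periodic_shift_integral[OF cw pw] by simp
  finally show ?thesis unfolding w_def fc_def .
qed

lemma fc_diff:
  fixes u v :: "real \<Rightarrow> complex"
  assumes "continuous_on {0..1} u" "continuous_on {0..1} v"
  shows "fc (\<lambda>x. u x - v x) k = fc u k - fc v k"
  unfolding fc_def by (simp add: left_diff_distrib integral_diff int01 continuous_intros assms)

lemma sum_le_bound_summable:
  fixes w :: "int \<Rightarrow> real"
  assumes "\<And>k. 0 \<le> w k" "\<And>F. finite F \<Longrightarrow> sum w F \<le> B"
  shows "w summable_on UNIV"
  by (rule nonneg_bdd_above_summable_on) (use assms in \<open>auto simp: bdd_above_def\<close>)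

lemma C1_sobolev1:
  fixes u u' :: "real \<Rightarrow> complex"
  assumes d: "\<And>x. (u has_vector_derivative u' x) (at x)" and c': "continuous_on UNIV u'"
    and per: "periodic1 u"
  shows "sobolev 1 u"
proof -
  have cu: "continuous_on S u" for S by (rule continuous_on_deriv[OF d])
  have meas: "u \<in> borel_measurable lborel"
    using borel_measurable_continuous_onI[OF cu] by simp
  have si: "set_integrable lborel {0..1} (\<lambda>x. (norm (u x))\<^sup>2)"
    unfolding set_integrable_def
    by (rule borel_integrable_compact) (auto intro!: continuous_intros cu)
  define B where "B = integral {0..1} (\<lambda>x. (cmod (u x))\<^sup>2) + integral {0..1} (\<lambda>x. (cmod (u' x))\<^sup>2) / (4 * pi\<^sup>2)"
  have "(\<lambda>k::int. (1 + (real_of_int k)\<^sup>2) ^ 1 * (norm (fourier_coeff u k))\<^sup>2) summable_on UNIV"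
  proof (rule sum_le_bound_summable)
    fix F :: "int set" assume F: "finite F"
    have eqk: "(1 + (real_of_int k)\<^sup>2) * (norm (fourier_coeff u k))\<^sup>2
        = (cmod (fc u k))\<^sup>2 + (cmod (fc u' k))\<^sup>2 / (4 * pi\<^sup>2)" for k
    proof -
      have "cmod (fc u' k) = 2 * pi * \<bar>real_of_int k\<bar> * cmod (fc u k)"
        using fc_deriv[OF d c' per, of k] by (simp add: norm_mult)
      then show ?thesis using fourier_coeff_fc[OF cu] by (simp add: field_simps power2_eq_square)
    qed
    have "(\<Sum>k\<in>F. (1 + (real_of_int k)\<^sup>2) ^ 1 * (norm (fourier_coeff u k))\<^sup>2)
        = (\<Sum>k\<in>F. (cmod (fc u k))\<^sup>2) + (\<Sum>k\<in>F. (cmod (fc u' k))\<^sup>2) / (4 * pi\<^sup>2)"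
      by (simp add: eqk sum.distrib sum_divide_distrib)
    also have "\<dots> \<le> B"
      unfolding B_def using bessel[OF cu F] bessel[OF continuous_on_subset[OF c'] F]
      by (intro add_mono divide_right_mono) auto
    finally show "(\<Sum>k\<in>F. (1 + (real_of_int k)\<^sup>2) ^ 1 * (norm (fourier_coeff u k))\<^sup>2) \<le> B" .
  qed simp
  then show ?thesis unfolding sobolev_def using per meas si by simp
qed

lemma lip_H1:
  fixes v :: "real \<Rightarrow> complex"
  assumes cv: "continuous_on UNIV v" and per: "periodic1 v"
    and lip: "\<And>h. integral {0..1} (\<lambda>x. (cmod (v (x + h) - v x))\<^sup>2) \<le> C * h\<^sup>2"
    and F: "finite F"
  shows "(\<Sum>k\<in>F. (real_of_int k)\<^sup>2 * (cmod (fc v k))\<^sup>2) \<le> C / pi\<^sup>2"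
proof -
  define M where "M = (\<Sum>k\<in>F. \<bar>real_of_int k\<bar>) + 1"
  have M1: "1 \<le> M" unfolding M_def by (simp add: sum_nonneg)
  have kM: "\<bar>real_of_int k\<bar> \<le> M" if "k \<in> F" for k
  proof -
    have "\<bar>real_of_int k\<bar> \<le> (\<Sum>k\<in>F. \<bar>real_of_int k\<bar>)"
      using F that by (intro member_le_sum) auto
    then show ?thesis unfolding M_def by simp
  qed
  define h where "h = 1 / (4 * M)"
  have h0: "0 < h" using M1 unfolding h_def by simp
  have cd: "continuous_on UNIV (\<lambda>x. v (x + h) - v x)"
    by (intro continuous_intros continuous_on_compose2[OF cv]) auto
  have fcd: "fc (\<lambda>x. v (x + h) - v x) k = (ee k h - 1) * fc v k" for k
  proof -
    have "fc (\<lambda>x. v (x + h) - v x) k = fc (\<lambda>x. v (x + h)) k - fc v k"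
      by (rule fc_diff) (auto intro!: continuous_intros continuous_on_compose2[OF cv] intro: continuous_on_subset[OF cv])
    also have "\<dots> = (ee k h - 1) * fc v k" using fc_shift[OF cv per, of h k] by (simp add: algebra_simps)
    finally show ?thesis .
  qed
  have low: "pi * \<bar>real_of_int k\<bar> * h \<le> cmod (ee k h - 1)" if "k \<in> F" for k
  proof -
    have "\<bar>2 * pi * real_of_int k * h\<bar> = 2 * pi * \<bar>real_of_int k\<bar> * h" using h0 by (simp add: abs_mult)
    also have "\<dots> \<le> 2 * pi * M * h" using kM[OF that] h0 by (intro mult_right_mono mult_left_mono) auto
    also have "\<dots> = pi / 2" unfolding h_def using M1 by simp
    also have "\<dots> \<le> 2" using pi_less_4 by simp
    finally have "\<bar>2 * pi * real_of_int k * h\<bar> \<le> 2" .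
    from ee_minus_one_lower[OF this] show ?thesis using h0 by (simp add: abs_mult)
  qed
  have "(\<Sum>k\<in>F. (pi * h)\<^sup>2 * ((real_of_int k)\<^sup>2 * (cmod (fc v k))\<^sup>2))
      \<le> (\<Sum>k\<in>F. (cmod (fc (\<lambda>x. v (x + h) - v x) k))\<^sup>2)"
  proof (intro sum_mono)
    fix k assume k: "k \<in> F"
    have "(pi * h)\<^sup>2 * ((real_of_int k)\<^sup>2 * (cmod (fc v k))\<^sup>2) = (pi * \<bar>real_of_int k\<bar> * h * cmod (fc v k))\<^sup>2"
      by (simp add: power_mult_distrib)
    also have "\<dots> \<le> (cmod (ee k h - 1) * cmod (fc v k))\<^sup>2"
      using low[OF k] h0 by (intro power_mono mult_right_mono) auto
    also have "\<dots> = (cmod (fc (\<lambda>x. v (x + h) - v x) k))\<^sup>2" by (simp add: fcd norm_mult)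
    finally show "(pi * h)\<^sup>2 * ((real_of_int k)\<^sup>2 * (cmod (fc v k))\<^sup>2) \<le> (cmod (fc (\<lambda>x. v (x + h) - v x) k))\<^sup>2" .
  qed
  also have "\<dots> \<le> integral {0..1} (\<lambda>x. (cmod (v (x + h) - v x))\<^sup>2)"
    by (rule bessel[OF continuous_on_subset[OF cd] F]) simp
  also have "\<dots> \<le> C * h\<^sup>2" by (rule lip)
  finally have "(pi * h)\<^sup>2 * (\<Sum>k\<in>F. (real_of_int k)\<^sup>2 * (cmod (fc v k))\<^sup>2) \<le> C * h\<^sup>2"
    by (simp add: sum_distrib_left)
  then have "(\<Sum>k\<in>F. (real_of_int k)\<^sup>2 * (cmod (fc v k))\<^sup>2) * (pi\<^sup>2 * h\<^sup>2) \<le> (C / pi\<^sup>2) * (pi\<^sup>2 * h\<^sup>2)"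
    by (simp add: power_mult_distrib algebra_simps)
  then have "(\<Sum>k\<in>F. (real_of_int k)\<^sup>2 * (cmod (fc v k))\<^sup>2) * pi\<^sup>2 \<le> C"
    using h0 by (simp add: mult_le_cancel_right)
  then show ?thesis by (simp add: pos_le_divide_eq)
qed

inductive_set TP :: "(real \<Rightarrow> complex) set" where
  TP_ee: "ee k \<in> TP"
| TP_scale: "h \<in> TP \<Longrightarrow> (\<lambda>x. c * h x) \<in> TP"
| TP_add: "h1 \<in> TP \<Longrightarrow> h2 \<in> TP \<Longrightarrow> (\<lambda>x. h1 x + h2 x) \<in> TP"

lemma TP_cont: "h \<in> TP \<Longrightarrow> continuous_on S h"
  by (induction rule: TP.induct) (auto intro!: continuous_intros)

lemma TP_const: "(\<lambda>x. c) \<in> TP"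
  using TP_scale[OF TP_ee[of 0], of c] by simp

lemma TP_ee_mult: "h \<in> TP \<Longrightarrow> (\<lambda>x. ee k x * h x) \<in> TP"
proof (induction rule: TP.induct)
  case (TP_ee l)
  have "(\<lambda>x. ee k x * ee l x) = ee (k + l)" by (rule ext) (simp add: ee_mult)
  then show ?case using TP.TP_ee by simp
next
  case (TP_scale h c)
  then show ?case using TP.TP_scale[OF TP_scale.IH, of c] by (simp add: algebra_simps)
next
  case (TP_add h1 h2)
  then show ?case using TP.TP_add[OF TP_add.IH] by (simp add: algebra_simps)
qed

lemma TP_mult: "h1 \<in> TP \<Longrightarrow> h2 \<in> TP \<Longrightarrow> (\<lambda>x. h1 x * h2 x) \<in> TP"
proof (induction arbitrary: h2 rule: TP.induct)
  case (TP_ee k)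
  then show ?case by (rule TP_ee_mult)
next
  case (TP_scale h c)
  then show ?case using TP.TP_scale[OF TP_scale.IH[OF TP_scale.prems], of c] by (simp add: algebra_simps)
next
  case (TP_add h1 h3)
  then show ?case using TP.TP_add[OF TP_add.IH(1)[OF TP_add.prems] TP_add.IH(2)[OF TP_add.prems]]
    by (simp add: algebra_simps)
qed

lemma TP_diff: "h1 \<in> TP \<Longrightarrow> h2 \<in> TP \<Longrightarrow> (\<lambda>x. h1 x - h2 x) \<in> TP"
  using TP_add[OF _ TP_scale[of h2 "-1"], of h1] by simp

lemma TP_orth:
  fixes g :: "real \<Rightarrow> complex"
  assumes cg: "continuous_on {0..1} g" and z: "\<And>k. fc g k = 0"
  shows "h \<in> TP \<Longrightarrow> integral {0..1} (\<lambda>x. g x * h x) = 0"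
proof (induction rule: TP.induct)
  case (TP_ee k)
  then show ?case using z[of "-k"] unfolding fc_def by simp
next
  case (TP_scale h c)
  have "integral {0..1} (\<lambda>x. g x * (c * h x)) = integral {0..1} (\<lambda>x. c * (g x * h x))"
    by (simp add: algebra_simps)
  also have "\<dots> = c * integral {0..1} (\<lambda>x. g x * h x)" by (rule integral_mult_right)
  finally show ?case using TP_scale.IH by simp
next
  case (TP_add h1 h2)
  have "integral {0..1} (\<lambda>x. g x * (h1 x + h2 x)) = integral {0..1} (\<lambda>x. g x * h1 x + g x * h2 x)"
    by (simp add: algebra_simps)
  also have "\<dots> = integral {0..1} (\<lambda>x. g x * h1 x) + integral {0..1} (\<lambda>x. g x * h2 x)"
    using TP_add.hyps by (intro integral_add int01 continuous_intros cg TP_cont)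
  finally show ?case using TP_add.IH by simp
qed

lemma ee1_surj:
  assumes "cmod z = 1"
  shows "\<exists>t\<in>{0..1}. ee 1 t = z"
proof -
  have z: "exp (\<i> * complex_of_real (Arg z)) = z" using assms complex_norm_eq_1_exp_eq by blast
  have e: "ee 1 (Arg z / (2 * pi)) = z"
    using z unfolding ee_def by (simp add: algebra_simps)
  show ?thesis
  proof (cases "0 \<le> Arg z")
    case True
    then show ?thesis using e Arg_le_pi[of z] pi_gt_zero by (intro bexI[of _ "Arg z / (2 * pi)"]) auto
  next
    case False
    have "ee 1 (Arg z / (2 * pi) + 1) = z" using e by (simp add: ee_periodic)
    moreover have "Arg z / (2 * pi) + 1 \<in> {0..1}"
      using False mpi_less_Arg[of z] by (auto simp: field_simps)
    ultimately show ?thesis by blast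
  qed
qed

lemma ee1_inj:
  assumes "ee 1 s = ee 1 t"
  shows "\<exists>n::int. s = t + of_int n"
proof -
  from assms obtain n where n: "2 * of_real pi * \<i> * of_int 1 * of_real s
      = 2 * of_real pi * \<i> * of_int 1 * of_real t + complex_of_real (real_of_int (2 * n) * pi) * \<i>"
    unfolding ee_def exp_eq by blast
  then have "Im (2 * of_real pi * \<i> * of_int 1 * of_real s) =
      Im (2 * of_real pi * \<i> * of_int 1 * of_real t + complex_of_real (real_of_int (2 * n) * pi) * \<i>)"
    by simp
  then have "2 * pi * s = 2 * pi * t + 2 * pi * of_int n" by (simp add: algebra_simps)
  then have "pi * (2 * s) = pi * (2 * (t + of_int n))" by (simp add: algebra_simps)
  then have "s = t + of_int n" by simp
  then show ?thesis by blast
qed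

definition circ_lift :: "(real \<Rightarrow> real) \<Rightarrow> complex \<Rightarrow> real" where
  "circ_lift u z = u (SOME t. t \<in> {0..1} \<and> ee 1 t = z)"

lemma circ_lift_ee:
  assumes per: "periodic1 u"
  shows "circ_lift u (ee 1 x) = u x"
proof -
  have "\<exists>t. t \<in> {0..1} \<and> ee 1 t = ee 1 x" using ee1_surj[of "ee 1 x"] by auto
  then have t: "(SOME t. t \<in> {0..1} \<and> ee 1 t = ee 1 x) \<in> {0..1} \<and>
      ee 1 (SOME t. t \<in> {0..1} \<and> ee 1 t = ee 1 x) = ee 1 x"
    by (rule someI_ex)
  then obtain n where "(SOME t. t \<in> {0..1} \<and> ee 1 t = ee 1 x) = x + of_int n"
    using ee1_inj by blast
  then show ?thesis unfolding circ_lift_def using periodic_int[OF per] by simp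
qed

lemma ee1_image: "ee 1 ` {0..1} = sphere 0 1"
proof
  show "ee 1 ` {0..1} \<subseteq> sphere 0 1" by auto
  show "sphere 0 1 \<subseteq> ee 1 ` {0..1}" using ee1_surj by fastforce
qed

lemma circ_lift_cont:
  assumes cu: "continuous_on UNIV u" and per: "periodic1 u"
  shows "continuous_on (sphere 0 1) (circ_lift u)"
  unfolding continuous_on_open_invariant
proof (intro allI impI)
  fix B :: "real set" assume B: "open B"
  define U where "U = sphere 0 1 \<inter> circ_lift u -` B"
  have "openin (top_of_set {0..1}) ({0..1} \<inter> ee 1 -` U)"
  proof -
    have eq: "{0..1} \<inter> ee 1 -` U = {0..1} \<inter> u -` B"
      unfolding U_def using circ_lift_ee[OF per] by auto
    obtain A where "open A" "A \<inter> {0..1} = u -` B \<inter> {0..1}"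
      using cu B continuous_on_open_invariant[of "{0..1}" u] continuous_on_subset[OF cu]
      by (meson subset_UNIV)
    then show ?thesis unfolding eq openin_open by blast
  qed
  then have "openin (top_of_set (sphere 0 1)) U"
    using Abstract_Topology_2.continuous_imp_quotient_map[where S="{0..1}" and f="ee 1" and T="sphere 0 1" and U=U] ee1_image
    by (auto simp: U_def intro: continuous_ee)
  then obtain A where "open A" "U = sphere 0 1 \<inter> A" unfolding openin_open by blast
  then show "\<exists>A. open A \<and> A \<inter> sphere 0 1 = circ_lift u -` B \<inter> sphere 0 1"
    unfolding U_def by blast
qed

lemma TP_approx_real:
  fixes u :: "real \<Rightarrow> real"
  assumes cu: "continuous_on UNIV u" and per: "periodic1 u" and e: "0 < e"
  shows "\<exists>h\<in>TP. \<forall>x. cmod (complex_of_real (u x) - h x) < e"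
proof -
  define P where "P F \<longleftrightarrow> continuous_on (sphere 0 1) F \<and> (\<exists>h\<in>TP. \<forall>x. complex_of_real (F (ee 1 x)) = h x)"
    for F :: "complex \<Rightarrow> real"
  have "\<exists>F. P F \<and> (\<forall>z\<in>sphere 0 1. \<bar>circ_lift u z - F z\<bar> < e)"
  proof (rule Stone_Weierstrass_HOL)
    show "compact (sphere (0::complex) 1)" by simp
    show "P (\<lambda>x. c)" for c unfolding P_def using TP_const by auto
    show "continuous_on (sphere 0 1) F" if "P F" for F using that unfolding P_def by blast
    show "P (\<lambda>x. F x + G x)" if "P F \<and> P G" for F G
    proof -
      from that obtain h1 h2 where "h1 \<in> TP" "h2 \<in> TP" "\<forall>x. complex_of_real (F (ee 1 x)) = h1 x"
        "\<forall>x. complex_of_real (G (ee 1 x)) = h2 x" "continuous_on (sphere 0 1) F" "continuous_on (sphere 0 1) G"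
        unfolding P_def by blast
      then show ?thesis unfolding P_def by (auto intro!: continuous_intros bexI[OF _ TP_add])
    qed
    show "P (\<lambda>x. F x * G x)" if "P F \<and> P G" for F G
    proof -
      from that obtain h1 h2 where "h1 \<in> TP" "h2 \<in> TP" "\<forall>x. complex_of_real (F (ee 1 x)) = h1 x"
        "\<forall>x. complex_of_real (G (ee 1 x)) = h2 x" "continuous_on (sphere 0 1) F" "continuous_on (sphere 0 1) G"
        unfolding P_def by blast
      then show ?thesis unfolding P_def by (auto intro!: continuous_intros bexI[OF _ TP_mult])
    qed
    have PRe: "P Re"
    proof -
      have "(\<lambda>x. (1/2) * ee 1 x + (1/2) * ee (-1) x) \<in> TP"
        by (intro TP_add TP_scale TP_ee)
      moreover have "complex_of_real (Re (ee 1 x)) = (1/2) * ee 1 x + (1/2) * ee (-1) x" for x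
        using complex_add_cnj[of "ee 1 x"] by (simp add: field_simps)
      ultimately show ?thesis unfolding P_def by (auto intro!: continuous_intros)
    qed
    have PIm: "P Im"
    proof -
      have "(\<lambda>x. (1/(2*\<i>)) * ee 1 x + (-1/(2*\<i>)) * ee (-1) x) \<in> TP"
        by (intro TP_add TP_scale TP_ee)
      moreover have "complex_of_real (Im (ee 1 x)) = (1/(2*\<i>)) * ee 1 x + (-1/(2*\<i>)) * ee (-1) x" for x
        using complex_diff_cnj[of "ee 1 x"] by (simp add: field_simps)
      ultimately show ?thesis unfolding P_def by (auto intro!: continuous_intros)
    qed
    show "\<exists>F. P F \<and> F x \<noteq> F y" if "x \<in> sphere 0 1 \<and> y \<in> sphere 0 1 \<and> x \<noteq> y" for x y
    proof (cases "Re x = Re y")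
      case True
      then have "Im x \<noteq> Im y" using that complex_eqI by blast
      then show ?thesis using PIm by blast
    next
      case False
      then show ?thesis using PRe by blast
    qed
    show "continuous_on (sphere 0 1) (circ_lift u)" by (rule circ_lift_cont[OF cu per])
    show "0 < e" by fact
  qed
  then obtain F h where h: "h \<in> TP" "\<forall>x. complex_of_real (F (ee 1 x)) = h x"
    and F: "\<forall>z\<in>sphere 0 1. \<bar>circ_lift u z - F z\<bar> < e"
    unfolding P_def by blast
  have "cmod (complex_of_real (u x) - h x) < e" for x
  proof -
    have "ee 1 x \<in> sphere 0 1" by simp
    then have "\<bar>u x - F (ee 1 x)\<bar> < e" using F circ_lift_ee[OF per] by metis
    then show ?thesis using h(2)[rule_format, of x, symmetric]
      by (simp del: of_real_diff add: of_real_diff[symmetric])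
  qed
  then show ?thesis using h(1) by blast
qed

lemma fc_zero_unique:
  fixes g :: "real \<Rightarrow> complex"
  assumes cg: "continuous_on UNIV g" and per: "periodic1 g" and z: "\<And>k. fc g k = 0"
  shows "g x = 0"
proof -
  have cg01: "continuous_on {0..1} g" using cg continuous_on_subset by blast
  define A where "A = integral {0..1} (\<lambda>x. cmod (g x))"
  have small: "integral {0..1} (\<lambda>x. (cmod (g x))\<^sup>2) \<le> 2 * e * A" if e: "0 < e" for e
  proof -
    have pre: "periodic1 (\<lambda>x. Re (g x))" "periodic1 (\<lambda>x. Im (g x))"
      using per unfolding periodic1_def by auto
    obtain h1 where h1: "h1 \<in> TP" "\<And>x. cmod (complex_of_real (Re (g x)) - h1 x) < e"
      using TP_approx_real[OF _ pre(1) e] by (auto intro!: continuous_intros cg)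
    obtain h2 where h2: "h2 \<in> TP" "\<And>x. cmod (complex_of_real (Im (g x)) - h2 x) < e"
      using TP_approx_real[OF _ pre(2) e] by (auto intro!: continuous_intros cg)
    define h where "h x = h1 x - \<i> * h2 x" for x
    have hTP: "h \<in> TP" unfolding h_def by (intro TP_diff TP_scale h1 h2)
    have ch: "continuous_on {0..1} h" by (rule TP_cont[OF hTP])
    have hb: "cmod (cnj (g x) - h x) \<le> 2 * e" for x
    proof -
      have "cnj (g x) - h x = (complex_of_real (Re (g x)) - h1 x) - \<i> * (complex_of_real (Im (g x)) - h2 x)"
        unfolding h_def by (simp add: complex_eq_iff)
      also have "cmod \<dots> \<le> cmod (complex_of_real (Re (g x)) - h1 x) + cmod (\<i> * (complex_of_real (Im (g x)) - h2 x))"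
        by (rule norm_triangle_ineq4)
      also have "\<dots> \<le> 2 * e" using h1(2)[of x] h2(2)[of x] by (simp add: norm_mult)
      finally show ?thesis .
    qed
    have "complex_of_real (integral {0..1} (\<lambda>x. (cmod (g x))\<^sup>2)) = integral {0..1} (\<lambda>x. g x * cnj (g x))"
      by (rule integral_norm_sq[OF cg01])
    also have "\<dots> = integral {0..1} (\<lambda>x. g x * (cnj (g x) - h x) + g x * h x)"
      by (simp add: algebra_simps)
    also have "\<dots> = integral {0..1} (\<lambda>x. g x * (cnj (g x) - h x)) + integral {0..1} (\<lambda>x. g x * h x)"
      by (intro integral_add int01 continuous_intros cg01 ch)
    also have "integral {0..1} (\<lambda>x. g x * h x) = 0" by (rule TP_orth[OF cg01 z hTP])
    finally have eq: "complex_of_real (integral {0..1} (\<lambda>x. (cmod (g x))\<^sup>2)) = integral {0..1} (\<lambda>x. g x * (cnj (g x) - h x))"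
      by simp
    have "norm (integral {0..1} (\<lambda>x. g x * (cnj (g x) - h x))) \<le> integral {0..1} (\<lambda>x. 2 * e * cmod (g x))"
    proof (rule integral_norm_bound_integral)
      show "(\<lambda>x. g x * (cnj (g x) - h x)) integrable_on {0..1}" by (intro int01 continuous_intros cg01 ch)
      show "(\<lambda>x. 2 * e * cmod (g x)) integrable_on {0..1}" by (intro int01 continuous_intros cg01)
      show "norm (g x * (cnj (g x) - h x)) \<le> 2 * e * cmod (g x)" for x
        using hb[of x] e by (simp add: norm_mult mult.commute mult_left_mono)
    qed
    also have "\<dots> = 2 * e * A" unfolding A_def by (rule integral_mult_right)
    finally have "norm (complex_of_real (integral {0..1} (\<lambda>x. (cmod (g x))\<^sup>2))) \<le> 2 * e * A"
      using eq by simp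
    then show ?thesis by simp
  qed
  have nn: "0 \<le> integral {0..1} (\<lambda>x. (cmod (g x))\<^sup>2)"
    by (rule integral_nonneg) (auto intro!: int01 continuous_intros cg01)
  have A0: "0 \<le> A" unfolding A_def by (rule integral_nonneg) (auto intro!: int01 continuous_intros cg01)
  have zero: "integral {0..1} (\<lambda>x. (cmod (g x))\<^sup>2) = 0"
  proof (rule ccontr)
    assume ne: "integral {0..1} (\<lambda>x. (cmod (g x))\<^sup>2) \<noteq> 0"
    define I where "I = integral {0..1} (\<lambda>x. (cmod (g x))\<^sup>2)"
    have I0: "0 < I" using ne nn unfolding I_def by simp
    define e where "e = I / (4 * (A + 1))"
    have e0: "0 < e" using I0 A0 unfolding e_def by simp
    have "I \<le> 2 * e * A" using small[OF e0] unfolding I_def .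
    also have "\<dots> < I" using I0 A0 unfolding e_def by (simp add: field_simps, simp add: add_pos_nonneg)
    finally show False by simp
  qed
  have g01: "g y = 0" if y: "y \<in> {0..1}" for y
  proof -
    have ci: "(\<lambda>x. (cmod (g x))\<^sup>2) integrable_on {0..1}" by (intro int01 continuous_intros cg01)
    have "((\<lambda>x. (cmod (g x))\<^sup>2) has_integral 0) (cbox 0 1)"
      using zero integrable_integral[OF ci] by simp
    then have "(\<lambda>x. (cmod (g x))\<^sup>2) y = 0"
      by (intro has_integral_0_cbox_imp_0[where a=0 and b=1 and f="\<lambda>x. (cmod (g x))\<^sup>2" and x=y])
         (use y in \<open>auto intro!: continuous_intros cg01\<close>)
    then show ?thesis by simp
  qed
  have "x - of_int (floor x) \<in> {0..1}" by (auto simp: floor_le_iff) linarith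
  from g01[OF this] show ?thesis using periodic_int[OF per, of "x - of_int (floor x)" "floor x"] by simp
qed

lemma sym_sum:
  fixes a :: "int \<Rightarrow> 'a::comm_monoid_add"
  shows "(\<Sum>n<N. (if n = 0 then a 0 else a (int n) + a (- int n))) = (\<Sum>k\<in>{k::int. \<bar>k\<bar> < int N}. a k)"
proof (induction N)
  case 0
  then show ?case by simp
next
  case (Suc N)
  show ?case
  proof (cases "N = 0")
    case True
    have "{k::int. \<bar>k\<bar> < 1} = {0}" by auto
    then show ?thesis using True by simp
  next
    case False
    have eq: "{k::int. \<bar>k\<bar> < int (Suc N)} = insert (int N) (insert (- int N) {k::int. \<bar>k\<bar> < int N})"
      by auto
    have fin: "finite {k::int. \<bar>k\<bar> < int N}"
      by (rule finite_subset[of _ "{- int N..int N}"]) auto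
    have "(\<Sum>k\<in>{k::int. \<bar>k\<bar> < int (Suc N)}. a k) = a (int N) + (a (- int N) + (\<Sum>k\<in>{k::int. \<bar>k\<bar> < int N}. a k))"
      unfolding eq using False fin by (simp add: sum.insert)
    then show ?thesis using Suc False by (simp add: algebra_simps)
  qed
qed

lemma finite_abs_less: "finite {k::int. \<bar>k\<bar> < int N}"
  by (rule finite_subset[of _ "{- int N..int N}"]) auto

definition dterm :: "(int \<Rightarrow> complex) \<Rightarrow> nat \<Rightarrow> real \<Rightarrow> complex" where
  "dterm c n x = (if n = 0 then c 0 * ee 0 x else c (int n) * ee (int n) x + c (- int n) * ee (- int n) x)"

definition bd :: "(int \<Rightarrow> complex) \<Rightarrow> nat \<Rightarrow> real" where
  "bd c n = (if n = 0 then cmod (c 0) else cmod (c (int n)) + cmod (c (- int n)))"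

definition fser :: "(int \<Rightarrow> complex) \<Rightarrow> real \<Rightarrow> complex" where
  "fser c x = (\<Sum>n. dterm c n x)"

definition l1 :: "(int \<Rightarrow> complex) \<Rightarrow> bool" where
  "l1 c \<longleftrightarrow> (\<exists>B. \<forall>F. finite F \<longrightarrow> (\<Sum>k\<in>F. cmod (c k)) \<le> B)"

lemma dterm_bound: "cmod (dterm c n x) \<le> bd c n"
  unfolding dterm_def bd_def
  by (auto simp: norm_mult intro!: order.trans[OF norm_triangle_ineq])

lemma bd_nonneg: "0 \<le> bd c n" unfolding bd_def by auto

lemma bd_summable: assumes "l1 c" shows "summable (bd c)"
proof -
  from assms obtain B where B: "\<And>F. finite F \<Longrightarrow> (\<Sum>k\<in>F. cmod (c k)) \<le> B" unfolding l1_def by blast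
  show ?thesis
  proof (rule summableI_nonneg_bounded[of _ B])
    show "0 \<le> bd c n" for n by (rule bd_nonneg)
    show "sum (bd c) {..<n} \<le> B" for n
      using sym_sum[of "\<lambda>k. cmod (c k)" n] B[OF finite_abs_less[of n]] unfolding bd_def by simp
  qed
qed

lemma dterm_summable: assumes "l1 c" shows "summable (\<lambda>n. dterm c n x)"
  by (rule summable_comparison_test[OF _ bd_summable[OF assms]]) (auto intro: dterm_bound)

lemma dterm_cont [continuous_intros]: "continuous_on S (dterm c n)"
  unfolding dterm_def by (cases "n = 0") (auto intro!: continuous_intros)

lemma integral_cnj_fc:
  assumes "continuous_on {0..1} u"
  shows "integral {0..1} (\<lambda>x. a * cnj (u x * ee (-l) x)) = a * cnj (fc u l)"
  unfolding fc_def
  by (subst integral_mult_right, subst integral_cnj01) (auto intro!: int01 continuous_intros assms)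

lemma dterm_periodic: "dterm c n (x + 1) = dterm c n x"
  unfolding dterm_def by (simp add: ee_periodic)

lemma int_series:
  fixes f :: "nat \<Rightarrow> real \<Rightarrow> complex"
  assumes c: "\<And>n. continuous_on {0..1} (f n)" and b: "\<And>n x. x \<in> {0..1} \<Longrightarrow> cmod (f n x) \<le> M n"
    and M: "summable M"
  shows "(\<lambda>n. integral {0..1} (f n)) sums integral {0..1} (\<lambda>x. \<Sum>n. f n x)"
proof -
  have u: "uniform_limit {0..1} (\<lambda>N x. \<Sum>i<N. f i x) (\<lambda>x. \<Sum>i. f i x) sequentially"
    by (rule Weierstrass_m_test[OF b M])
  obtain I J where I: "\<And>N. ((\<lambda>x. \<Sum>i<N. f i x) has_integral I N) {0..1}"
    and J: "((\<lambda>x. \<Sum>i. f i x) has_integral J) {0..1}" and IJ: "I \<longlonglongrightarrow> J"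
    by (rule uniform_limit_integral[OF u]) (auto intro!: continuous_intros c)
  have "I N = (\<Sum>i<N. integral {0..1} (f i))" for N
  proof -
    have "I N = integral {0..1} (\<lambda>x. \<Sum>i<N. f i x)" using I integral_unique by metis
    also have "\<dots> = (\<Sum>i<N. integral {0..1} (f i))"
      by (rule integral_sum) (auto intro: int01 c)
    finally show ?thesis .
  qed
  then have "I = (\<lambda>N. \<Sum>i<N. integral {0..1} (f i))" by (simp add: fun_eq_iff)
  then have "(\<lambda>N. \<Sum>i<N. integral {0..1} (f i)) \<longlonglongrightarrow> J" using IJ by simp
  moreover have "J = integral {0..1} (\<lambda>x. \<Sum>n. f n x)" by (rule integral_unique[OF J, symmetric])
  ultimately show ?thesis unfolding sums_def by simp
qed

lemma fser_unif:
  assumes "l1 c"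
  shows "uniform_limit UNIV (\<lambda>N x. \<Sum>i<N. dterm c i x) (fser c) sequentially"
  unfolding fser_def[abs_def] by (rule Weierstrass_m_test[OF dterm_bound bd_summable[OF assms]])

lemma fser_cont: assumes "l1 c" shows "continuous_on UNIV (fser c)"
  by (rule uniform_limit_theorem[OF always_eventually[OF allI] fser_unif[OF assms]]) (auto intro!: continuous_on_sum dterm_cont)

lemma fser_periodic: "periodic1 (fser c)"
  unfolding periodic1_def fser_def by (simp add: dterm_periodic)

lemma fc_dterm: "fc (dterm c n) k = (if int n = \<bar>k\<bar> then c k else 0)"
proof (cases "n = 0")
  case True
  have "fc (dterm c n) k = fc (\<lambda>x. \<Sum>j\<in>{0}. c j * ee j x) k"
    using True unfolding dterm_def by simp
  also have "\<dots> = (if k \<in> {0} then c k else 0)" by (rule fc_sum_ee) simp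
  finally show ?thesis using True by auto
next
  case False
  have "fc (dterm c n) k = fc (\<lambda>x. \<Sum>j\<in>{int n, - int n}. c j * ee j x) k"
    using False unfolding dterm_def by simp
  also have "\<dots> = (if k \<in> {int n, - int n} then c k else 0)" by (rule fc_sum_ee) simp
  finally show ?thesis using False by auto
qed

lemma fc_fser:
  assumes "l1 c"
  shows "fc (fser c) k = c k"
proof -
  have "(\<lambda>n. integral {0..1} (\<lambda>x. dterm c n x * ee (-k) x)) sums
      integral {0..1} (\<lambda>x. \<Sum>n. dterm c n x * ee (-k) x)"
    by (rule int_series[where M="bd c"]) (auto intro!: continuous_intros bd_summable assms simp: norm_mult dterm_bound)
  moreover have "(\<lambda>x. \<Sum>n. dterm c n x * ee (-k) x) = (\<lambda>x. fser c x * ee (-k) x)"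
    unfolding fser_def by (rule ext) (simp add: suminf_mult2 dterm_summable[OF assms])
  moreover have "(\<lambda>n. integral {0..1} (\<lambda>x. dterm c n x * ee (-k) x)) = (\<lambda>n. if n = nat \<bar>k\<bar> then c k else 0)"
    using fc_dterm[of c _ k] unfolding fc_def by (auto simp: fun_eq_iff)
  ultimately have "(\<lambda>n. if n = nat \<bar>k\<bar> then c k else 0) sums fc (fser c) k"
    unfolding fc_def by simp
  moreover have "(\<lambda>n. if n = nat \<bar>k\<bar> then c k else 0) sums c k"
    using sums_single[of "nat \<bar>k\<bar>" "\<lambda>_. c k"] by simp
  ultimately show ?thesis using sums_unique2 by blast
qed

lemma fser_bound: assumes "l1 c" shows "cmod (fser c x) \<le> suminf (bd c)"
proof -
  have sn: "summable (\<lambda>n. cmod (dterm c n x))"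
    by (rule summable_comparison_test[OF _ bd_summable[OF assms]]) (auto intro: dterm_bound)
  have "cmod (fser c x) \<le> (\<Sum>n. cmod (dterm c n x))"
    unfolding fser_def by (rule summable_norm[OF sn])
  also have "\<dots> \<le> suminf (bd c)"
    by (rule suminf_le[OF _ sn bd_summable[OF assms]]) (rule dterm_bound)
  finally show ?thesis .
qed

lemma parseval_le:
  assumes l: "l1 c" and B: "\<And>F. finite F \<Longrightarrow> (\<Sum>k\<in>F. (cmod (c k))\<^sup>2) \<le> B"
  shows "integral {0..1} (\<lambda>x. (cmod (fser c x))\<^sup>2) \<le> B"
proof -
  define T where "T = suminf (bd c)"
  define pw where "pw n = (if n = 0 then (cmod (c 0))\<^sup>2 else (cmod (c (int n)))\<^sup>2 + (cmod (c (- int n)))\<^sup>2)" for n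
  have cf: "continuous_on UNIV (fser c)" by (rule fser_cont[OF l])
  have cf01: "continuous_on {0..1} (fser c)" by (rule continuous_on_subset[OF cf]) simp
  have "(\<lambda>n. integral {0..1} (\<lambda>x. dterm c n x * cnj (fser c x))) sums
      integral {0..1} (\<lambda>x. \<Sum>n. dterm c n x * cnj (fser c x))"
  proof (rule int_series[where M="\<lambda>n. bd c n * T"])
    show "continuous_on {0..1} (\<lambda>x. dterm c n x * cnj (fser c x))" for n
      by (intro continuous_intros continuous_on_subset[OF cf]) auto
    show "cmod (dterm c n x * cnj (fser c x)) \<le> bd c n * T" for n x
      unfolding norm_mult complex_mod_cnj T_def
      by (intro mult_mono dterm_bound fser_bound l bd_nonneg) auto
    show "summable (\<lambda>n. bd c n * T)" by (intro summable_mult2 bd_summable l)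
  qed
  moreover have "(\<lambda>x. \<Sum>n. dterm c n x * cnj (fser c x)) = (\<lambda>x. fser c x * cnj (fser c x))"
    unfolding fser_def[of c] by (rule ext) (simp add: suminf_mult2 dterm_summable[OF l])
  moreover have "integral {0..1} (\<lambda>x. dterm c n x * cnj (fser c x)) = complex_of_real (pw n)" for n
  proof (cases "n = 0")
    case True
    have "integral {0..1} (\<lambda>x. dterm c n x * cnj (fser c x)) = c 0 * cnj (fc (fser c) 0)"
    proof -
      have "integral {0..1} (\<lambda>x. dterm c n x * cnj (fser c x)) = integral {0..1} (\<lambda>x. c 0 * cnj (fser c x * ee (- 0) x))"
        using True unfolding dterm_def by simp
      also have "\<dots> = c 0 * cnj (fc (fser c) 0)"
        by (rule integral_cnj_fc) (rule continuous_on_subset[OF cf], simp)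
      finally show ?thesis .
    qed
    then show ?thesis using True fc_fser[OF l] unfolding pw_def by (simp add: ofr_cmod_sq)
  next
    case False
    have "integral {0..1} (\<lambda>x. dterm c n x * cnj (fser c x)) =
        integral {0..1} (\<lambda>x. c (int n) * cnj (fser c x * ee (- int n) x) + c (- int n) * cnj (fser c x * ee (- (- int n)) x))"
      using False unfolding dterm_def by (simp add: algebra_simps)
    also have "\<dots> = integral {0..1} (\<lambda>x. c (int n) * cnj (fser c x * ee (- int n) x)) +
        integral {0..1} (\<lambda>x. c (- int n) * cnj (fser c x * ee (- (- int n)) x))"
      by (rule integral_add) (auto intro!: int01 continuous_intros continuous_on_subset[OF cf])
    also have "\<dots> = c (int n) * cnj (fc (fser c) (int n)) + c (- int n) * cnj (fc (fser c) (- int n))"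
      using cf01 by (simp only: integral_cnj_fc)
    finally show ?thesis using False fc_fser[OF l] unfolding pw_def by (simp add: ofr_cmod_sq)
  qed
  moreover have "integral {0..1} (\<lambda>x. fser c x * cnj (fser c x)) = complex_of_real (integral {0..1} (\<lambda>x. (cmod (fser c x))\<^sup>2))"
    by (rule integral_norm_sq[symmetric]) (rule continuous_on_subset[OF cf], simp)
  ultimately have "(\<lambda>n. complex_of_real (pw n)) sums complex_of_real (integral {0..1} (\<lambda>x. (cmod (fser c x))\<^sup>2))"
    by simp
  then have s: "pw sums integral {0..1} (\<lambda>x. (cmod (fser c x))\<^sup>2)" by (simp add: sums_of_real_iff)
  have "sum pw {..<N} \<le> B" for N
    using sym_sum[of "\<lambda>k. (cmod (c k))\<^sup>2" N] B[OF finite_abs_less[of N]] unfolding pw_def by simp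
  then have "suminf pw \<le> B" by (intro suminf_le_const) (use s in \<open>auto simp: sums_iff\<close>)
  then show ?thesis using s sums_unique by metis
qed

lemma fser_shift:
  assumes "l1 c"
  shows "fser c (x + h) - fser c x = fser (\<lambda>k. c k * (ee k h - 1)) x"
proof -
  have "fser c (x + h) - fser c x = (\<Sum>n. dterm c n (x + h) - dterm c n x)"
    unfolding fser_def by (rule suminf_diff) (auto intro: dterm_summable assms)
  also have "\<dots> = fser (\<lambda>k. c k * (ee k h - 1)) x"
    unfolding fser_def dterm_def by (intro suminf_cong) (simp add: ee_add algebra_simps)
  finally show ?thesis .
qed

lemma cos_shift_int: "cos (x + 2 * pi * of_int n) = cos x"
  by (simp add: cos_add cos_int_2pin sin_int_2pin)

lemma dist_int_lower:
  fixes y :: real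
  assumes "y \<notin> \<int>"
  shows "min (frac y) (1 - frac y) \<le> \<bar>y + of_int p\<bar>"
proof -
  have f: "y = of_int (floor y) + frac y" by (simp add: frac_def)
  show ?thesis
  proof (cases "0 \<le> y + of_int p")
    case True
    have "0 \<le> floor y + p"
    proof (rule ccontr)
      assume "\<not> 0 \<le> floor y + p"
      then have "floor y + p \<le> -1" by simp
      then have "real_of_int (floor y + p) \<le> -1" by linarith
      then show False using True frac_lt_1[of y] f by simp
    qed
    then have "frac y \<le> y + of_int p" using f by (smt (verit) of_int_add of_int_nonneg)
    then show ?thesis using True by simp
  next
    case False
    have "floor y + p \<le> -1"
    proof (rule ccontr)
      assume "\<not> floor y + p \<le> -1"
      then have "0 \<le> floor y + p" by simp
      then have "0 \<le> real_of_int (floor y + p)" by linarith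
      then show False using False frac_ge_0[of y] f by simp
    qed
    then have "real_of_int (floor y + p) \<le> -1" by linarith
    then have "1 - frac y \<le> - (y + of_int p)" using f by simp
    then show ?thesis using False by simp
  qed
qed

lemma irrat_mult_notin_Ints:
  fixes \<alpha> :: real
  assumes "\<alpha> \<notin> \<rat>" "k \<noteq> 0"
  shows "\<alpha> * of_int k \<notin> \<int>"
proof
  assume "\<alpha> * of_int k \<in> \<int>"
  then obtain m where "\<alpha> * of_int k = of_int m" by (auto elim: Ints_cases)
  then have "\<alpha> = of_int m / of_int k" using assms(2) by (simp add: field_simps)
  then have "\<alpha> \<in> \<rat>" by simp
  then show False using assms(1) by simp
qed

lemma liou_approx:
  fixes \<alpha> :: real
  assumes irr: "\<alpha> \<notin> \<rat>" and li: "liouvillean \<alpha>"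
  shows "\<exists>q::nat. M < q \<and> (\<exists>p::int. \<bar>\<alpha> * real q + of_int p\<bar> < 1 / real q ^ n)"
proof -
  define m where "m k = min (frac (\<alpha> * of_int k)) (1 - frac (\<alpha> * of_int k))" for k :: int
  have m_pos: "0 < m k" if "k \<noteq> 0" for k
  proof -
    have "\<alpha> * of_int k \<notin> \<int>" by (rule irrat_mult_notin_Ints[OF irr that])
    then have "frac (\<alpha> * of_int k) \<noteq> 0" by (simp add: frac_eq_0_iff)
    then have "0 < frac (\<alpha> * of_int k)" using frac_ge_0[of "\<alpha> * of_int k"] by linarith
    moreover have "frac (\<alpha> * of_int k) < 1" by (rule frac_lt_1)
    ultimately show ?thesis unfolding m_def by simp
  qed
  have m_le: "m k \<le> \<bar>\<alpha> * of_int k + of_int p\<bar>" if "k \<noteq> 0" for k p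
    unfolding m_def by (rule dist_int_lower[OF irrat_mult_notin_Ints[OF irr that]])
  have m_half: "m k \<le> 1" for k unfolding m_def using frac_ge_0 by simp
  define K where "K = {- int M - 1..int M + 1} - {0}"
  have Kfin: "finite K" unfolding K_def by simp
  have "1 \<in> K" unfolding K_def by simp
  then have Kne: "K \<noteq> {}" by blast
  define \<delta> where "\<delta> = Min (m ` K)"
  have \<delta>_pos: "0 < \<delta>" unfolding \<delta>_def using Kfin Kne m_pos by (auto simp: K_def)
  have \<delta>_le: "\<delta> \<le> m k" if "k \<in> K" for k unfolding \<delta>_def using Kfin that by simp
  have \<delta>1: "\<delta> \<le> 1" using \<delta>_le[of 1] m_half[of 1] by (simp add: K_def)
  have "\<not> diophantine \<alpha> (real n + 1)" using li unfolding liouvillean_def by auto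
  then obtain k :: int where k0: "k \<noteq> 0"
    and kI: "(INF p::int. \<bar>\<alpha> * of_int k + of_int p\<bar>) < \<delta> / (real_of_int \<bar>k\<bar>) powr (1 + (real n + 1))"
    unfolding diophantine_def using \<delta>_pos by (auto simp: not_le)
  have bdd: "bdd_below (range (\<lambda>p::int. \<bar>\<alpha> * of_int k + of_int p\<bar>))"
    by (rule bdd_belowI[of _ 0]) auto
  from kI obtain p :: int where p: "\<bar>\<alpha> * of_int k + of_int p\<bar> < \<delta> / (real_of_int \<bar>k\<bar>) powr (1 + (real n + 1))"
    using cINF_less_iff[OF _ bdd] by auto
  have kpos: "0 < real_of_int \<bar>k\<bar>" using k0 by simp
  have pw: "(real_of_int \<bar>k\<bar>) powr (1 + (real n + 1)) = (real_of_int \<bar>k\<bar>) ^ (n + 2)"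
  proof -
    have "1 + (real n + 1) = real (n + 2)" by simp
    then show ?thesis using powr_realpow[OF kpos, of "n + 2"] by metis
  qed
  have k1: "1 \<le> real_of_int \<bar>k\<bar>" using k0 by linarith
  have "1 \<le> (real_of_int \<bar>k\<bar>) ^ (n + 2)" using k1 by (rule one_le_power)
  then have "\<delta> / (real_of_int \<bar>k\<bar>) ^ (n + 2) \<le> \<delta>"
    using \<delta>_pos by (simp add: divide_le_eq del: power_Suc)
  then have small: "\<bar>\<alpha> * of_int k + of_int p\<bar> < \<delta>" using p pw by simp
  have big: "int M < \<bar>k\<bar>"
  proof (rule ccontr)
    assume "\<not> int M < \<bar>k\<bar>"
    then have "k \<in> K" unfolding K_def using k0 by auto
    then have "\<delta> \<le> \<bar>\<alpha> * of_int k + of_int p\<bar>" using \<delta>_le m_le[OF k0] order.trans by blast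
    then show False using small by simp
  qed
  define q where "q = nat \<bar>k\<bar>"
  have q: "real q = real_of_int \<bar>k\<bar>" unfolding q_def by simp
  have "1 / (real_of_int \<bar>k\<bar>) ^ (n + 2) \<le> 1 / (real_of_int \<bar>k\<bar>) ^ n"
    using k1 by (intro divide_left_mono power_increasing) auto
  then have "\<delta> / (real_of_int \<bar>k\<bar>) ^ (n + 2) \<le> 1 / (real_of_int \<bar>k\<bar>) ^ n"
    using \<delta>1 \<delta>_pos kpos
    by (smt (verit, ccfv_SIG) divide_right_mono zero_less_power)
  then have pq: "\<bar>\<alpha> * of_int k + of_int p\<bar> < 1 / real q ^ n" using p pw q by simp
  show ?thesis
  proof (cases "0 < k")
    case True
    then have "\<bar>\<alpha> * real q + of_int p\<bar> < 1 / real q ^ n" using pq q by simp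
    then show ?thesis using big q by (intro exI[of _ q]) auto
  next
    case False
    then have "\<bar>\<alpha> * of_int k + of_int p\<bar> = \<bar>\<alpha> * real q + of_int (- p)\<bar>" using q by simp
    then have "\<bar>\<alpha> * real q + of_int (- p)\<bar> < 1 / real q ^ n" using pq by simp
    moreover have "M < q" using big unfolding q_def by linarith
    ultimately show ?thesis by blast
  qed
qed

definition good :: "real \<Rightarrow> nat \<Rightarrow> nat \<Rightarrow> bool" where
  "good \<alpha> n q \<longleftrightarrow> (\<exists>p::int. \<bar>\<alpha> * real q + of_int p\<bar> < 1 / real q ^ n)"

primrec qs :: "real \<Rightarrow> nat \<Rightarrow> nat" where
  "qs \<alpha> 0 = (SOME q. 2 < q \<and> good \<alpha> 0 q)"
| "qs \<alpha> (Suc j) = (SOME q. 2 * qs \<alpha> j < q \<and> good \<alpha> (Suc j) q)"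

definition U :: "real \<Rightarrow> nat \<Rightarrow> nat \<Rightarrow> real \<Rightarrow> real" where
  "U \<alpha> j n x = (2 * pi * real (qs \<alpha> j)) ^ n / (real (qs \<alpha> j))\<^sup>2 *
      cos (2 * pi * real (qs \<alpha> j) * x + real n * pi / 2)"

lemma cos_add_pi_half: "cos (t + pi / 2) = - sin t"
  by (simp add: cos_add)

lemma U_deriv: "((\<lambda>x. U \<alpha> j n (x + c)) has_real_derivative U \<alpha> j (Suc n) (x + c)) (at x)"
proof -
  define q where "q = real (qs \<alpha> j)"
  have e: "cos (2 * pi * q * (x + c) + real (Suc n) * pi / 2) = - sin (2 * pi * q * (x + c) + real n * pi / 2)"
    using cos_add_pi_half[of "2 * pi * q * (x + c) + real n * pi / 2"] by (simp add: algebra_simps add_divide_distrib)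
  have d: "((\<lambda>x. cos (2 * pi * q * (x + c) + real n * pi / 2)) has_real_derivative
      (- sin (2 * pi * q * (x + c) + real n * pi / 2)) * (2 * pi * q)) (at x)"
    by (auto intro!: derivative_eq_intros)
  show ?thesis
    unfolding U_def q_def[symmetric]
    by (rule DERIV_cong[OF DERIV_cmult[OF d]]) (simp only: e power_Suc, simp add: algebra_simps)
qed

lemma U_periodic: "U \<alpha> j n (x + 1) = U \<alpha> j n x"
proof -
  have "2 * pi * real (qs \<alpha> j) * (x + 1) + real n * pi / 2 =
        (2 * pi * real (qs \<alpha> j) * x + real n * pi / 2) + 2 * pi * of_int (int (qs \<alpha> j))"
    by (simp add: algebra_simps)
  then show ?thesis unfolding U_def by (simp only: cos_shift_int)
qed

context
  fixes \<alpha> :: real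
  assumes irr: "\<alpha> \<notin> \<rat>" and li: "liouvillean \<alpha>"
begin

lemma qs_props: "2 ^ (Suc j) \<le> qs \<alpha> j \<and> good \<alpha> j (qs \<alpha> j)"
proof (induction j)
  case 0
  have "\<exists>q. 2 < q \<and> good \<alpha> 0 q" using liou_approx[OF irr li, of 2 0] unfolding good_def by blast
  then have "2 < qs \<alpha> 0 \<and> good \<alpha> 0 (qs \<alpha> 0)" unfolding qs.simps by (rule someI_ex)
  then show ?case by simp
next
  case (Suc j)
  have "\<exists>q. 2 * qs \<alpha> j < q \<and> good \<alpha> (Suc j) q"
    using liou_approx[OF irr li, of "2 * qs \<alpha> j" "Suc j"] unfolding good_def by blast
  then have "2 * qs \<alpha> j < qs \<alpha> (Suc j) \<and> good \<alpha> (Suc j) (qs \<alpha> (Suc j))" unfolding qs.simps(2) by (rule someI_ex)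
  then show ?case using Suc.IH by simp
qed

lemma qs_mono: "qs \<alpha> j < qs \<alpha> (Suc j)"
proof -
  have "\<exists>q. 2 * qs \<alpha> j < q \<and> good \<alpha> (Suc j) q"
    using liou_approx[OF irr li, of "2 * qs \<alpha> j" "Suc j"] unfolding good_def by blast
  then have "2 * qs \<alpha> j < qs \<alpha> (Suc j) \<and> good \<alpha> (Suc j) (qs \<alpha> (Suc j))" unfolding qs.simps(2) by (rule someI_ex)
  then show ?thesis by simp
qed

lemma qs_strict_mono: "strict_mono (qs \<alpha>)"
  by (rule strict_monoI_Suc) (rule qs_mono)

lemma qs_inj: "qs \<alpha> i = qs \<alpha> j \<longleftrightarrow> i = j"
  using strict_mono_eq[OF qs_strict_mono] .

lemma qs_ge: "2 ^ Suc j \<le> real (qs \<alpha> j)"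
proof -
  have "2 ^ Suc j \<le> qs \<alpha> j" using qs_props by blast
  then show ?thesis by (metis of_nat_le_iff of_nat_numeral of_nat_power)
qed

lemma qs_pos: "1 \<le> real (qs \<alpha> j)"
  using qs_ge[of j] by (smt (verit) one_le_power)

lemma inv_qs_le: "1 / real (qs \<alpha> j) \<le> (1/2) ^ j"
proof -
  have "1 / real (qs \<alpha> j) \<le> 1 / 2 ^ Suc j" using qs_ge[of j] by (intro frac_le) auto
  also have "\<dots> \<le> (1/2) ^ j" by (auto simp: power_one_over intro!: frac_le)
  finally show ?thesis .
qed

lemma summable_half: "summable (\<lambda>j::nat. C * (1/2::real) ^ j)"
  by (intro summable_mult summable_geometric) simp

lemma U0_bound: "\<bar>U \<alpha> j 0 x\<bar> \<le> (1/2) ^ j"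
proof -
  have "\<bar>U \<alpha> j 0 x\<bar> = \<bar>cos (2 * pi * real (qs \<alpha> j) * x)\<bar> / (real (qs \<alpha> j))\<^sup>2"
    unfolding U_def by (simp add: abs_mult)
  also have "\<dots> \<le> 1 / (real (qs \<alpha> j))\<^sup>2" by (intro divide_right_mono abs_cos_le_one) auto
  also have "\<dots> \<le> 1 / real (qs \<alpha> j)" using qs_pos[of j] by (intro divide_left_mono) (auto simp: power2_eq_square)
  also have "\<dots> \<le> (1/2) ^ j" by (rule inv_qs_le)
  finally show ?thesis .
qed

lemma U1_bound: "\<bar>U \<alpha> j 1 x\<bar> \<le> 2 * pi * (1/2) ^ j"
proof -
  define q where "q = real (qs \<alpha> j)"
  have q1: "1 \<le> q" unfolding q_def by (rule qs_pos)
  have "\<bar>U \<alpha> j 1 x\<bar> = 2 * pi * q / q\<^sup>2 * \<bar>cos (2 * pi * q * x + pi / 2)\<bar>"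
    unfolding U_def q_def[symmetric] using q1 by (simp add: abs_mult)
  also have "\<dots> \<le> 2 * pi * q / q\<^sup>2 * 1"
    using q1 by (intro mult_left_mono abs_cos_le_one) auto
  also have "\<dots> = 2 * pi * (1 / q)" using q1 by (simp add: power2_eq_square)
  also have "\<dots> \<le> 2 * pi * (1/2) ^ j" unfolding q_def using mult_left_mono[OF inv_qs_le[of j], of "2 * pi"] by simp
  finally show ?thesis .
qed

lemma cos_diff_le: fixes a b :: real shows "\<bar>cos a - cos b\<bar> \<le> \<bar>a - b\<bar>"
proof -
  have "\<bar>cos a - cos b\<bar> = 2 * \<bar>sin ((a + b) / 2)\<bar> * \<bar>sin ((b - a) / 2)\<bar>"
    by (simp add: cos_diff_cos abs_mult)
  also have "\<dots> \<le> 2 * 1 * \<bar>(b - a) / 2\<bar>"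
    by (intro mult_mono abs_sin_le_one abs_sin_x_le_abs_x) auto
  finally show ?thesis by simp
qed

lemma UD_bound:
  assumes "n \<le> j"
  shows "\<bar>U \<alpha> j n (x + \<alpha>) - U \<alpha> j n x\<bar> \<le> (2 * pi) ^ Suc n * (1/2) ^ j"
proof -
  define q where "q = real (qs \<alpha> j)"
  have q1: "1 \<le> q" unfolding q_def by (rule qs_pos)
  obtain p :: int where p: "\<bar>\<alpha> * q + of_int p\<bar> < 1 / q ^ j"
    using qs_props[of j] unfolding good_def q_def by blast
  define A where "A = 2 * pi * q * x + real n * pi / 2"
  have "2 * pi * q * (x + \<alpha>) + real n * pi / 2 = (A + 2 * pi * (\<alpha> * q + of_int p)) + 2 * pi * of_int (- p)"
    unfolding A_def by (simp add: algebra_simps)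
  then have c: "cos (2 * pi * q * (x + \<alpha>) + real n * pi / 2) = cos (A + 2 * pi * (\<alpha> * q + of_int p))"
    by (simp only: cos_shift_int)
  have "\<bar>cos (A + 2 * pi * (\<alpha> * q + of_int p)) - cos A\<bar> \<le> 2 * pi * \<bar>\<alpha> * q + of_int p\<bar>"
    using cos_diff_le[of "A + 2 * pi * (\<alpha> * q + of_int p)" A] by (simp add: abs_mult)
  also have "\<dots> \<le> 2 * pi * (1 / q ^ j)" using p by (intro mult_left_mono) auto
  finally have cd: "\<bar>cos (A + 2 * pi * (\<alpha> * q + of_int p)) - cos A\<bar> \<le> 2 * pi * (1 / q ^ j)" .
  define Cn where "Cn = (2 * pi * q) ^ n / q\<^sup>2"
  have Cn0: "\<bar>Cn\<bar> = Cn" unfolding Cn_def using q1 by simp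
  have u1: "U \<alpha> j n (x + \<alpha>) = Cn * cos (A + 2 * pi * (\<alpha> * q + of_int p))"
    unfolding U_def q_def[symmetric] c Cn_def ..
  have u2: "U \<alpha> j n x = Cn * cos A"
    unfolding U_def q_def[symmetric] Cn_def A_def ..
  have "\<bar>U \<alpha> j n (x + \<alpha>) - U \<alpha> j n x\<bar> = (2 * pi * q) ^ n / q\<^sup>2 * \<bar>cos (A + 2 * pi * (\<alpha> * q + of_int p)) - cos A\<bar>"
    unfolding u1 u2 right_diff_distrib[symmetric] abs_mult using Cn0 by (auto simp: Cn_def)
  also have "\<dots> \<le> (2 * pi * q) ^ n / q\<^sup>2 * (2 * pi * (1 / q ^ j))"
    using q1 by (intro mult_left_mono cd) auto
  also have "\<dots> = (2 * pi) ^ Suc n * (q ^ n / q ^ j) * (1 / q\<^sup>2)"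
    by (simp add: power_mult_distrib field_simps)
  also have "\<dots> \<le> (2 * pi) ^ Suc n * 1 * (1/2) ^ j"
  proof (intro mult_mono)
    show "q ^ n / q ^ j \<le> 1" using q1 assms by (simp add: divide_le_eq_1 power_increasing)
    have "1 / q\<^sup>2 \<le> 1 / q" using q1 by (intro divide_left_mono) (auto simp: power2_eq_square)
    then show "1 / q\<^sup>2 \<le> (1/2) ^ j" using inv_qs_le[of j] unfolding q_def by linarith
    show "0 \<le> q ^ n / q ^ j" using q1 by simp
  qed auto
  finally show ?thesis by simp
qed

end

lemma U_deriv0: "(U \<alpha> j n has_real_derivative U \<alpha> j (Suc n) x) (at x)"
  using U_deriv[of \<alpha> j n 0 x] by simp

context
  fixes \<alpha> :: real
  assumes irr: "\<alpha> \<notin> \<rat>" and li: "liouvillean \<alpha>"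
begin

definition RR :: "real \<Rightarrow> real" where "RR x = (\<Sum>j. U \<alpha> j 0 x)"
definition Rd :: "real \<Rightarrow> real" where "Rd x = (\<Sum>j. U \<alpha> j 1 x)"
definition DD :: "nat \<Rightarrow> real \<Rightarrow> real" where "DD n x = (\<Sum>j. U \<alpha> j n (x + \<alpha>) - U \<alpha> j n x)"
definition M1 :: real where "M1 = (\<Sum>j. 2 * pi * (1/2::real) ^ j)"

lemma U0_summable: "summable (\<lambda>j. U \<alpha> j 0 x)"
  by (rule summable_comparison_test[OF _ summable_half[OF irr li, of 1]]) (use U0_bound[OF irr li] in auto)

lemma U1_summable: "summable (\<lambda>j. U \<alpha> j 1 x)"
  by (rule summable_comparison_test[OF _ summable_half[OF irr li, of "2 * pi"]]) (use U1_bound[OF irr li] in auto)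

lemma UD_summable: "summable (\<lambda>j. U \<alpha> j n (x + \<alpha>) - U \<alpha> j n x)"
  by (rule summable_comparison_test'[OF summable_half[OF irr li, of "(2 * pi) ^ Suc n"], of n])
     (use UD_bound[OF irr li] in auto)

lemma U0_unif: "uniform_limit UNIV (\<lambda>N x. \<Sum>j<N. U \<alpha> j 0 x) RR sequentially"
  unfolding RR_def[abs_def]
  by (rule Weierstrass_m_test[OF _ summable_half[OF irr li, of 1]]) (use U0_bound[OF irr li] in auto)

lemma U1_unif: "uniform_limit UNIV (\<lambda>N x. \<Sum>j<N. U \<alpha> j 1 x) Rd sequentially"
  unfolding Rd_def[abs_def]
  by (rule Weierstrass_m_test[OF _ summable_half[OF irr li, of "2 * pi"]]) (use U1_bound[OF irr li] in auto)

lemma U_cont: "continuous_on S (U \<alpha> j n)"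
  unfolding U_def by (intro continuous_intros)

lemma RR_cont: "continuous_on UNIV RR"
  by (rule uniform_limit_theorem[OF always_eventually[OF allI] U0_unif]) (auto intro!: continuous_on_sum U_cont)

lemma Rd_cont: "continuous_on UNIV Rd"
  by (rule uniform_limit_theorem[OF always_eventually[OF allI] U1_unif]) (auto intro!: continuous_on_sum U_cont)

lemma RR_deriv: "(RR has_real_derivative Rd x) (at x)"
proof -
  have "((\<lambda>x. \<Sum>j. U \<alpha> j 0 x) has_field_derivative (\<Sum>j. U \<alpha> j (Suc 0) x)) (at x)"
  proof (rule has_field_derivative_series'(2)[where S=UNIV and f="\<lambda>j x. U \<alpha> j 0 x" and f'="\<lambda>j x. U \<alpha> j (Suc 0) x"])
    show "uniformly_convergent_on UNIV (\<lambda>N x. \<Sum>j<N. U \<alpha> j (Suc 0) x)"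
      by (rule Weierstrass_m_test'[OF _ summable_half[OF irr li, of "2 * pi"]]) (use U1_bound[OF irr li] in auto)
  qed (auto intro: U_deriv0 U0_summable)
  then show ?thesis unfolding RR_def[abs_def] Rd_def by simp
qed

lemma RR_periodic: "periodic1 RR"
  unfolding periodic1_def RR_def by (simp add: U_periodic)

lemma Rd_periodic: "periodic1 Rd"
  unfolding periodic1_def Rd_def by (simp add: U_periodic)

lemma Rd_bound: "\<bar>Rd x\<bar> \<le> M1"
proof -
  have s: "summable (\<lambda>j. \<bar>U \<alpha> j 1 x\<bar>)"
    by (rule summable_comparison_test[OF _ summable_half[OF irr li, of "2 * pi"]]) (use U1_bound[OF irr li] in auto)
  have "\<bar>Rd x\<bar> \<le> (\<Sum>j. \<bar>U \<alpha> j 1 x\<bar>)" unfolding Rd_def using summable_rabs[OF s] .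
  also have "\<dots> \<le> M1" unfolding M1_def
    by (rule suminf_le[OF _ s summable_half[OF irr li]]) (rule U1_bound[OF irr li])
  finally show ?thesis .
qed

lemma M1_nonneg: "0 \<le> M1"
  using Rd_bound[of 0] by linarith

lemma RR_lip: "\<bar>RR (x + h) - RR x\<bar> \<le> M1 * \<bar>h\<bar>"
proof (cases "h = 0")
  case True then show ?thesis by simp
next
  case False
  define a where "a = min x (x + h)"
  define b where "b = max x (x + h)"
  have ab: "a < b" using False unfolding a_def b_def by auto
  obtain z where "RR b - RR a = (b - a) * Rd z"
    using MVT2[OF ab, of RR Rd] RR_deriv by blast
  then have "\<bar>RR b - RR a\<bar> \<le> \<bar>b - a\<bar> * M1" using Rd_bound[of z] by (simp add: abs_mult mult_left_mono)
  moreover have "\<bar>RR (x + h) - RR x\<bar> = \<bar>RR b - RR a\<bar>" "\<bar>b - a\<bar> = \<bar>h\<bar>"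
    unfolding a_def b_def by (auto simp: min_def max_def abs_minus_commute)
  ultimately show ?thesis by (simp add: mult.commute)
qed

lemma DD_deriv: "(DD n has_real_derivative DD (Suc n) x) (at x)"
proof -
  have "((\<lambda>x. \<Sum>j. U \<alpha> j n (x + \<alpha>) - U \<alpha> j n x) has_field_derivative
        (\<Sum>j. U \<alpha> j (Suc n) (x + \<alpha>) - U \<alpha> j (Suc n) x)) (at x)"
  proof (rule has_field_derivative_series'(2)[where S=UNIV and f="\<lambda>j x. U \<alpha> j n (x + \<alpha>) - U \<alpha> j n x"
      and f'="\<lambda>j x. U \<alpha> j (Suc n) (x + \<alpha>) - U \<alpha> j (Suc n) x"])
    show "uniformly_convergent_on UNIV (\<lambda>N x. \<Sum>j<N. U \<alpha> j (Suc n) (x + \<alpha>) - U \<alpha> j (Suc n) x)"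
    proof (rule Weierstrass_m_test'_ev[OF _ summable_half[OF irr li, of "(2 * pi) ^ Suc (Suc n)"]])
      show "\<forall>\<^sub>F j in sequentially. \<forall>x\<in>UNIV. norm (U \<alpha> j (Suc n) (x + \<alpha>) - U \<alpha> j (Suc n) x) \<le> (2 * pi) ^ Suc (Suc n) * (1/2) ^ j"
        unfolding eventually_sequentially using UD_bound[OF irr li, of "Suc n"] by (intro exI[of _ "Suc n"]) simp
    qed
    show "((\<lambda>x. U \<alpha> j n (x + \<alpha>) - U \<alpha> j n x) has_field_derivative
            U \<alpha> j (Suc n) (x + \<alpha>) - U \<alpha> j (Suc n) x) (at x within UNIV)" for j x
      by (intro DERIV_diff U_deriv U_deriv0)
  qed (auto intro: UD_summable)
  then show ?thesis unfolding DD_def[abs_def] by simp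
qed

lemma DD0: "DD 0 x = RR (x + \<alpha>) - RR x"
  unfolding DD_def RR_def by (rule suminf_diff[symmetric]) (auto intro: U0_summable)

lemma DD_periodic: "periodic1 (DD 0)"
  unfolding periodic1_def DD0 using RR_periodic unfolding periodic1_def by (metis add.commute add.left_commute)

end

lemma cos_ee: "complex_of_real (cos (2 * pi * of_int k * x)) = (ee k x + ee (-k) x) / 2"
proof -
  have "ee k x = cis (2 * pi * of_int k * x)" unfolding ee_exp_i cis_conv_exp ..
  then have "complex_of_real (cos (2 * pi * of_int k * x)) = complex_of_real (Re (ee k x))" by simp
  also have "\<dots> = (ee k x + cnj (ee k x)) / 2" using complex_add_cnj[of "ee k x"] by simp
  finally show ?thesis by simp
qed

lemma infsum_ge_sum:
  fixes w :: "int \<Rightarrow> real"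
  assumes "w summable_on UNIV" "\<And>k. 0 \<le> w k" "finite F"
  shows "sum w F \<le> infsum w UNIV"
proof -
  have "infsum w F \<le> infsum w UNIV"
    by (rule infsum_mono_neutral) (use assms in \<open>auto intro: summable_on_finite\<close>)
  moreover have "infsum w F = sum w F" by (rule infsum_finite[OF assms(3)])
  ultimately show ?thesis by simp
qed

context
  fixes \<alpha> :: real
  assumes irr: "\<alpha> \<notin> \<rat>" and li: "liouvillean \<alpha>"
begin

lemma qs_sum_unbounded:
  fixes w :: "int \<Rightarrow> real"
  assumes c: "0 < c" and wq: "\<And>j. c \<le> w (int (qs \<alpha> j))" and w0: "\<And>k. 0 \<le> w k"
    and B: "\<And>F. finite F \<Longrightarrow> sum w F \<le> B"
  shows False
proof -
  obtain N :: nat where N: "B / c < real N" using reals_Archimedean2 by blast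
  define F where "F = (\<lambda>j. int (qs \<alpha> j)) ` {..<N}"
  have inj: "inj_on (\<lambda>j. int (qs \<alpha> j)) {..<N}" using qs_inj[OF irr li] by (auto simp: inj_on_def)
  have "sum w F = (\<Sum>j<N. w (int (qs \<alpha> j)))" unfolding F_def by (rule sum.reindex_cong[OF inj refl refl])
  also have "\<dots> \<ge> (\<Sum>j<N. c)" by (intro sum_mono wq)
  finally have "real N * c \<le> sum w F" by simp
  moreover have "sum w F \<le> B" using B unfolding F_def by simp
  moreover have "B < real N * c" using N c by (simp add: field_simps)
  ultimately show False by simp
qed

lemma U0_ee: "complex_of_real (U \<alpha> j 0 x) =
    (\<Sum>k\<in>{int (qs \<alpha> j), - int (qs \<alpha> j)}. (1 / (2 * (real (qs \<alpha> j))\<^sup>2)) * ee k x)"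
proof -
  define q where "q = qs \<alpha> j"
  have q0: "int q \<noteq> - int q" using qs_pos[OF irr li, of j] unfolding q_def by simp
  have "complex_of_real (U \<alpha> j 0 x) = complex_of_real (cos (2 * pi * of_int (int q) * x)) / (real q)\<^sup>2"
    unfolding U_def q_def by simp
  also have "\<dots> = (ee (int q) x + ee (- int q) x) / (2 * (real q)\<^sup>2)" unfolding cos_ee by simp
  finally show ?thesis using q0 unfolding q_def[symmetric] by (simp add: field_simps)
qed

lemma fc_RR_qs: "fc (\<lambda>x. complex_of_real (RR \<alpha> x)) (int (qs \<alpha> m)) = 1 / (2 * (real (qs \<alpha> m))\<^sup>2)"
proof -
  define k where "k = int (qs \<alpha> m)"
  have "(\<lambda>j. integral {0..1} (\<lambda>x. complex_of_real (U \<alpha> j 0 x) * ee (-k) x)) sums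
      integral {0..1} (\<lambda>x. \<Sum>j. complex_of_real (U \<alpha> j 0 x) * ee (-k) x)"
  proof (rule int_series[where M="\<lambda>j. (1/2) ^ j"])
    show "continuous_on {0..1} (\<lambda>x. complex_of_real (U \<alpha> j 0 x) * ee (- k) x)" for j
      by (intro continuous_intros continuous_on_of_real U_cont[OF irr li])
    show "cmod (complex_of_real (U \<alpha> j 0 x) * ee (- k) x) \<le> (1/2) ^ j" for j x
      using U0_bound[OF irr li, of j x] by (simp add: norm_mult)
  qed (rule summable_geometric, simp)
  moreover have "(\<lambda>x. \<Sum>j. complex_of_real (U \<alpha> j 0 x) * ee (-k) x) = (\<lambda>x. complex_of_real (RR \<alpha> x) * ee (-k) x)"
  proof (rule ext)
    fix x
    have "(\<Sum>j. complex_of_real (U \<alpha> j 0 x) * ee (-k) x) = (\<Sum>j. complex_of_real (U \<alpha> j 0 x)) * ee (-k) x"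
      by (rule suminf_mult2[symmetric]) (rule summable_of_real[OF U0_summable[OF irr li]])
    also have "\<dots> = complex_of_real (RR \<alpha> x) * ee (-k) x"
    proof -
      have "complex_of_real (\<Sum>j. U \<alpha> j 0 x) = (\<Sum>j. complex_of_real (U \<alpha> j 0 x))"
        by (rule suminf_of_real[OF U0_summable[OF irr li]])
      then show ?thesis unfolding RR_def[OF irr li] by simp
    qed
    finally show "(\<Sum>j. complex_of_real (U \<alpha> j 0 x) * ee (-k) x) = complex_of_real (RR \<alpha> x) * ee (-k) x" .
  qed
  moreover have "integral {0..1} (\<lambda>x. complex_of_real (U \<alpha> j 0 x) * ee (-k) x) =
      (if j = m then complex_of_real (1 / (2 * (real (qs \<alpha> m))\<^sup>2)) else 0)" for j
  proof -
    have "integral {0..1} (\<lambda>x. complex_of_real (U \<alpha> j 0 x) * ee (-k) x) =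
        fc (\<lambda>x. \<Sum>k\<in>{int (qs \<alpha> j), - int (qs \<alpha> j)}. (1 / (2 * (real (qs \<alpha> j))\<^sup>2)) * ee k x) k"
      unfolding fc_def U0_ee ..
    also have "\<dots> = (if k \<in> {int (qs \<alpha> j), - int (qs \<alpha> j)} then complex_of_real (1 / (2 * (real (qs \<alpha> j))\<^sup>2)) else 0)"
      by (rule fc_sum_ee) simp
    also have "\<dots> = (if j = m then complex_of_real (1 / (2 * (real (qs \<alpha> m))\<^sup>2)) else 0)"
    proof -
      have "k \<in> {int (qs \<alpha> j), - int (qs \<alpha> j)} \<longleftrightarrow> j = m"
        using qs_inj[OF irr li, of j m] qs_pos[OF irr li, of m] qs_pos[OF irr li, of j] unfolding k_def by auto
      then show ?thesis by auto
    qed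
    finally show ?thesis .
  qed
  ultimately have "(\<lambda>j. if j = m then complex_of_real (1 / (2 * (real (qs \<alpha> m))\<^sup>2)) else 0) sums
      fc (\<lambda>x. complex_of_real (RR \<alpha> x)) k"
    unfolding fc_def by simp
  moreover have "(\<lambda>j. if j = m then complex_of_real (1 / (2 * (real (qs \<alpha> m))\<^sup>2)) else 0) sums
      complex_of_real (1 / (2 * (real (qs \<alpha> m))\<^sup>2))"
    using sums_single[of m "\<lambda>_. complex_of_real (1 / (2 * (real (qs \<alpha> m))\<^sup>2))"] by simp
  ultimately show ?thesis unfolding k_def using sums_unique2 by (metis of_real_1 of_real_divide)
qed

lemma Rc_deriv: "((\<lambda>x. complex_of_real (RR \<alpha> x)) has_vector_derivative complex_of_real (Rd \<alpha> x)) (at x)"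
  by (rule has_vector_derivative_of_real[OF RR_deriv[OF irr li]])

lemma Rc_sobolev1: "sobolev 1 (\<lambda>x. complex_of_real (RR \<alpha> x))"
proof (rule C1_sobolev1[OF Rc_deriv])
  show "continuous_on UNIV (\<lambda>x. complex_of_real (Rd \<alpha> x))"
    by (intro continuous_on_of_real Rd_cont[OF irr li])
  show "periodic1 (\<lambda>x. complex_of_real (RR \<alpha> x))"
    using RR_periodic[OF irr li] unfolding periodic1_def by simp
qed

lemma Rc_not_sobolev2: "\<not> sobolev 2 (\<lambda>x. complex_of_real (RR \<alpha> x))"
proof
  assume "sobolev 2 (\<lambda>x. complex_of_real (RR \<alpha> x))"
  then have s: "(\<lambda>k::int. (1 + (real_of_int k)\<^sup>2) ^ 2 * (norm (fourier_coeff (\<lambda>x. complex_of_real (RR \<alpha> x)) k))\<^sup>2) summable_on UNIV"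
    unfolding sobolev_def by blast
  have cR: "continuous_on {0..1} (\<lambda>x. complex_of_real (RR \<alpha> x))"
    by (intro continuous_on_of_real continuous_on_subset[OF RR_cont[OF irr li]]) auto
  show False
  proof (rule qs_sum_unbounded[where c="1/4"])
    show "\<And>F. finite F \<Longrightarrow> sum (\<lambda>k::int. (1 + (real_of_int k)\<^sup>2) ^ 2 * (norm (fourier_coeff (\<lambda>x. complex_of_real (RR \<alpha> x)) k))\<^sup>2) F
        \<le> infsum (\<lambda>k::int. (1 + (real_of_int k)\<^sup>2) ^ 2 * (norm (fourier_coeff (\<lambda>x. complex_of_real (RR \<alpha> x)) k))\<^sup>2) UNIV"
      by (rule infsum_ge_sum[OF s]) auto
    show "1/4 \<le> (1 + (real_of_int (int (qs \<alpha> j)))\<^sup>2) ^ 2 * (norm (fourier_coeff (\<lambda>x. complex_of_real (RR \<alpha> x)) (int (qs \<alpha> j))))\<^sup>2" for j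
    proof -
      define q where "q = real (qs \<alpha> j)"
      have q1: "1 \<le> q" unfolding q_def by (rule qs_pos[OF irr li])
      have "norm (fourier_coeff (\<lambda>x. complex_of_real (RR \<alpha> x)) (int (qs \<alpha> j))) = 1 / (2 * q\<^sup>2)"
        unfolding fourier_coeff_fc[OF cR] fc_RR_qs q_def using q1
        by (simp del: of_real_divide add: of_real_divide[symmetric] norm_divide)
      moreover have "1/4 \<le> (1 + q\<^sup>2) ^ 2 * (1 / (2 * q\<^sup>2))\<^sup>2"
      proof -
        have "(q\<^sup>2)\<^sup>2 \<le> (1 + q\<^sup>2) ^ 2" by (intro power_mono) auto
        then show ?thesis using q1 by (simp add: field_simps power2_eq_square)
      qed
      ultimately show ?thesis unfolding q_def by simp
    qed
  qed auto
qed

end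

lemma exp_i_diff: "cmod (exp (\<i> * complex_of_real s) - exp (\<i> * complex_of_real t)) \<le> \<bar>s - t\<bar>"
proof -
  have "exp (\<i> * complex_of_real s) - exp (\<i> * complex_of_real t) =
      exp (\<i> * complex_of_real t) * (exp (\<i> * complex_of_real (s - t)) - 1)"
    by (simp add: algebra_simps exp_add[symmetric])
  then have "cmod (exp (\<i> * complex_of_real s) - exp (\<i> * complex_of_real t)) =
      cmod (exp (\<i> * complex_of_real t)) * cmod (exp (\<i> * complex_of_real (s - t)) - 1)"
    by (simp only: norm_mult)
  also have "\<dots> = 2 * \<bar>sin ((s - t) / 2)\<bar>"
    using dist_exp_i_1[of "s - t"] by (simp del: of_real_diff)
  also have "\<dots> \<le> 2 * \<bar>(s - t) / 2\<bar>" using abs_sin_x_le_abs_x[of "(s - t) / 2"] by linarith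
  finally show ?thesis by simp
qed

lemma omega_bound: "\<exists>S. \<forall>F. finite F \<longrightarrow> (\<Sum>k\<in>F. if k = 0 then 0 else 1 / (real_of_int k)\<^sup>2) \<le> S"
proof -
  define om where "om k = (if k = 0 then 0 else 1 / (real_of_int k)\<^sup>2)" for k :: int
  have om0: "0 \<le> om k" for k unfolding om_def by simp
  have sm: "summable (\<lambda>n::nat. inverse (real n ^ 2))" by (rule inverse_power_summable) simp
  define S where "S = 2 * (\<Sum>n. inverse (real n ^ 2))"
  have "(\<Sum>k\<in>F. om k) \<le> S" if F: "finite F" for F
  proof -
    define N where "N = nat (\<Sum>k\<in>F. \<bar>k\<bar>) + 1"
    have sub: "F \<subseteq> {k. \<bar>k\<bar> < int N}"
    proof
      fix k assume "k \<in> F"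
      then have "\<bar>k\<bar> \<le> (\<Sum>k\<in>F. \<bar>k\<bar>)" using F by (intro member_le_sum) auto
      then show "k \<in> {k. \<bar>k\<bar> < int N}" unfolding N_def by simp
    qed
    have "(\<Sum>k\<in>F. om k) \<le> (\<Sum>k\<in>{k. \<bar>k\<bar> < int N}. om k)"
      by (rule sum_mono2[OF finite_abs_less sub]) (rule om0)
    also have "\<dots> = (\<Sum>n<N. (if n = 0 then om 0 else om (int n) + om (- int n)))"
      by (rule sym_sum[symmetric])
    also have "\<dots> = (\<Sum>n<N. 2 * inverse (real n ^ 2))"
      by (intro sum.cong refl) (auto simp: om_def field_simps)
    also have "\<dots> \<le> S" unfolding S_def sum_distrib_left[symmetric]
      by (intro mult_left_mono sum_le_suminf sm) auto
    finally show ?thesis .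
  qed
  then show ?thesis unfolding om_def by blast
qed

lemma sq_sum_le: "(p + q)\<^sup>2 \<le> 2 * p\<^sup>2 + 2 * (q::real)\<^sup>2"
  using sum_squares_ge_zero[of "p - q" 0] by (simp add: power2_eq_square algebra_simps)

context
  fixes \<alpha> :: real
  assumes irr: "\<alpha> \<notin> \<rat>" and li: "liouvillean \<alpha>"
begin

lemma expR_deriv:
  "((\<lambda>x. exp (\<i> * complex_of_real (l * RR \<alpha> x))) has_vector_derivative
     (\<i> * complex_of_real (l * Rd \<alpha> x)) * exp (\<i> * complex_of_real (l * RR \<alpha> x))) (at x)"
proof -
  have "((\<lambda>x. complex_of_real (l * RR \<alpha> x)) has_vector_derivative complex_of_real (l * Rd \<alpha> x)) (at x)"
    by (intro has_vector_derivative_of_real DERIV_cmult RR_deriv[OF irr li])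
  then have "((\<lambda>x. \<i> * complex_of_real (l * RR \<alpha> x)) has_vector_derivative \<i> * complex_of_real (l * Rd \<alpha> x)) (at x)"
    by (rule has_vector_derivative_mult_right)
  from field_vector_diff_chain_at[OF this DERIV_exp] show ?thesis by (simp add: o_def)
qed

lemma expR_sobolev1: "sobolev 1 (\<lambda>x. exp (\<i> * complex_of_real (l * RR \<alpha> x)))"
proof (rule C1_sobolev1[OF expR_deriv])
  show "continuous_on UNIV (\<lambda>x. \<i> * complex_of_real (l * Rd \<alpha> x) * exp (\<i> * complex_of_real (l * RR \<alpha> x)))"
    by (intro continuous_intros continuous_on_of_real Rd_cont[OF irr li] RR_cont[OF irr li])
  show "periodic1 (\<lambda>x. exp (\<i> * complex_of_real (l * RR \<alpha> x)))"
    using RR_periodic[OF irr li] unfolding periodic1_def by simp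
qed

end

context
  fixes \<alpha> :: real
  assumes irr: "\<alpha> \<notin> \<rat>" and li: "liouvillean \<alpha>"
begin

lemma expR_not_sobolev2:
  assumes l0: "l \<noteq> 0"
  shows "\<not> sobolev 2 (\<lambda>x. exp (\<i> * complex_of_real (l * RR \<alpha> x)))"
proof
  define f where "f x = exp (\<i> * complex_of_real (l * RR \<alpha> x))" for x
  define a where "a x = (\<i> * complex_of_real (l * Rd \<alpha> x)) * f x" for x
  define v where "v x = complex_of_real (Rd \<alpha> x)" for x
  define Rc where "Rc x = complex_of_real (RR \<alpha> x)" for x
  assume "sobolev 2 (\<lambda>x. exp (\<i> * complex_of_real (l * RR \<alpha> x)))"
  then have s2: "sobolev 2 f" unfolding f_def[abs_def] .
  have fd: "(f has_vector_derivative a x) (at x)" for x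
    unfolding f_def[abs_def] a_def f_def by (rule expR_deriv[OF irr li])
  have cf: "continuous_on S f" for S by (rule continuous_on_deriv[OF fd])
  have ca: "continuous_on S a" for S unfolding a_def
    by (intro continuous_intros continuous_on_of_real continuous_on_subset[OF Rd_cont[OF irr li]] cf) auto
  have cv: "continuous_on S v" for S unfolding v_def
    by (intro continuous_on_of_real continuous_on_subset[OF Rd_cont[OF irr li]]) auto
  have pf: "periodic1 f" using RR_periodic[OF irr li] unfolding periodic1_def f_def by simp
  have pa: "periodic1 a" using RR_periodic[OF irr li] Rd_periodic[OF irr li] unfolding periodic1_def a_def f_def by simp
  have pv: "periodic1 v" using Rd_periodic[OF irr li] unfolding periodic1_def v_def by simp
  have pR: "periodic1 Rc" using RR_periodic[OF irr li] unfolding periodic1_def Rc_def by simp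
  have nf: "cmod (f x) = 1" for x unfolding f_def by simp
  have fcf: "f x * cnj (f x) = 1" for x
    using complex_norm_square[of "f x"] nf[of x] by simp
  define w where "w k = (1 + (real_of_int k)\<^sup>2) ^ 2 * (norm (fc f k))\<^sup>2" for k
  have w0: "0 \<le> w k" for k unfolding w_def by simp
  have ws: "w summable_on UNIV"
    using s2 unfolding sobolev_def w_def fourier_coeff_fc[OF cf] by simp
  define W where "W = infsum w UNIV"
  have wF: "sum w F \<le> W" if "finite F" for F unfolding W_def by (rule infsum_ge_sum[OF ws w0 that])
  have W0: "0 \<le> W" using wF[of "{}"] by simp
  have k4: "(real_of_int k) ^ 4 * (cmod (fc f k))\<^sup>2 \<le> w k" for k
  proof -
    have "(real_of_int k) ^ 4 = ((real_of_int k)\<^sup>2)\<^sup>2" by simp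
    also have "\<dots> \<le> (1 + (real_of_int k)\<^sup>2) ^ 2" by (intro power_mono) auto
    finally show ?thesis unfolding w_def by (intro mult_right_mono) auto
  qed
  define c where "c k = fc a k" for k
  have ck: "c k = 2 * of_real pi * \<i> * of_int k * fc f k" for k
    unfolding c_def by (rule fc_deriv[OF fd ca pf])
  have nck: "cmod (c k) = 2 * pi * \<bar>real_of_int k\<bar> * cmod (fc f k)" for k
    unfolding ck by (simp add: norm_mult)
  obtain S where S: "\<And>F. finite F \<Longrightarrow> (\<Sum>k\<in>F. if k = 0 then 0 else 1 / (real_of_int k)\<^sup>2) \<le> S"
    using omega_bound by blast
  have l1c: "l1 c" unfolding l1_def
  proof (intro exI allI impI)
    fix F :: "int set" assume F: "finite F"
    have "cmod (c k) \<le> pi * ((if k = 0 then 0 else 1 / (real_of_int k)\<^sup>2) + w k)" for k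
    proof (cases "k = 0")
      case True then show ?thesis using w0[of k] by (simp add: nck)
    next
      case False
      define z where "z = cmod (fc f k)"
      define r where "r = \<bar>real_of_int k\<bar>"
      have r0: "0 < r" using False unfolding r_def by simp
      have "0 \<le> (1 / r - r\<^sup>2 * z)\<^sup>2" by simp
      also have "(1 / r - r\<^sup>2 * z)\<^sup>2 = (1 / r)\<^sup>2 + (r\<^sup>2 * z)\<^sup>2 - 2 * (1 / r) * (r\<^sup>2 * z)"
        by (rule power2_diff)
      also have "2 * (1 / r) * (r\<^sup>2 * z) = 2 * r * z" using r0 by (simp add: power2_eq_square)
      also have "(r\<^sup>2 * z)\<^sup>2 = r ^ 4 * z\<^sup>2" by (simp add: power_mult_distrib flip: power_mult)
      also have "(1 / r)\<^sup>2 = 1 / r\<^sup>2" by (simp add: power_one_over)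
      finally have "2 * r * z \<le> 1 / r\<^sup>2 + r ^ 4 * z\<^sup>2" by simp
      moreover have "r ^ 4 * z\<^sup>2 \<le> w k" using k4[of k] unfolding r_def z_def by (simp add: power_abs)
      moreover have "1 / r\<^sup>2 = 1 / (real_of_int k)\<^sup>2" unfolding r_def by simp
      ultimately have "2 * r * z \<le> 1 / (real_of_int k)\<^sup>2 + w k" by linarith
      moreover have "cmod (c k) = pi * (2 * r * z)" unfolding nck r_def z_def by simp
      ultimately show ?thesis using False mult_left_mono[of "2 * r * z" _ pi] pi_gt_zero by simp
    qed
    then have "(\<Sum>k\<in>F. cmod (c k)) \<le> (\<Sum>k\<in>F. pi * ((if k = 0 then 0 else 1 / (real_of_int k)\<^sup>2) + w k))"
      by (rule sum_mono)
    also have "\<dots> = pi * ((\<Sum>k\<in>F. if k = 0 then 0 else 1 / (real_of_int k)\<^sup>2) + sum w F)"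
      by (simp only: sum.distrib[symmetric] sum_distrib_left)
    also have "\<dots> \<le> pi * (S + W)" using S[OF F] wF[OF F] by (intro mult_left_mono) auto
    finally show "(\<Sum>k\<in>F. cmod (c k)) \<le> pi * (S + W)" .
  qed
  have aA: "a x = fser c x" for x
  proof -
    have "(\<lambda>x. a x - fser c x) x = 0"
    proof (rule fc_zero_unique)
      show "continuous_on UNIV (\<lambda>x. a x - fser c x)" by (intro continuous_intros ca fser_cont[OF l1c])
      show "periodic1 (\<lambda>x. a x - fser c x)" using pa fser_periodic[of c] unfolding periodic1_def by simp
      show "fc (\<lambda>x. a x - fser c x) k = 0" for k
        using fc_diff[OF ca continuous_on_subset[OF fser_cont[OF l1c]], of k] fc_fser[OF l1c, of k]
        unfolding c_def by simp
    qed
    then show ?thesis by simp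
  qed
  have da: "integral {0..1} (\<lambda>x. (cmod (a (x + h) - a x))\<^sup>2) \<le> 16 * pi ^ 4 * W * h\<^sup>2" for h
  proof -
    define c' where "c' k = c k * (ee k h - 1)" for k
    have eq: "a (x + h) - a x = fser c' x" for x unfolding aA c'_def by (rule fser_shift[OF l1c])
    have l1c': "l1 c'" unfolding l1_def
    proof -
      from l1c obtain B where B: "\<And>F. finite F \<Longrightarrow> (\<Sum>k\<in>F. cmod (c k)) \<le> B" unfolding l1_def by blast
      have "(\<Sum>k\<in>F. cmod (c' k)) \<le> 2 * B" if "finite F" for F
      proof -
        have "cmod (c' k) \<le> 2 * cmod (c k)" for k
        proof -
          have "cmod (ee k h - 1) \<le> cmod (ee k h) + cmod (1::complex)" by (rule norm_triangle_ineq4)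
          then have "cmod (ee k h - 1) \<le> 2" by simp
          then show ?thesis unfolding c'_def norm_mult
            using mult_left_mono[of "cmod (ee k h - 1)" 2 "cmod (c k)"] by (simp add: mult.commute)
        qed
        then have "(\<Sum>k\<in>F. cmod (c' k)) \<le> (\<Sum>k\<in>F. 2 * cmod (c k))" by (rule sum_mono)
        also have "\<dots> \<le> 2 * B" using B[OF that] by (simp add: sum_distrib_left[symmetric])
        finally show ?thesis .
      qed
      then show "\<exists>B. \<forall>F. finite F \<longrightarrow> (\<Sum>k\<in>F. cmod (c' k)) \<le> B" by blast
    qed
    have "integral {0..1} (\<lambda>x. (cmod (fser c' x))\<^sup>2) \<le> 16 * pi ^ 4 * W * h\<^sup>2"
    proof (rule parseval_le[OF l1c'])
      fix F :: "int set" assume F: "finite F"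
      have "(cmod (c' k))\<^sup>2 \<le> 16 * pi ^ 4 * h\<^sup>2 * w k" for k
      proof -
        have "(cmod (c' k))\<^sup>2 = (cmod (c k))\<^sup>2 * (cmod (ee k h - 1))\<^sup>2" unfolding c'_def by (simp add: norm_mult power_mult_distrib)
        also have "\<dots> \<le> (cmod (c k))\<^sup>2 * (2 * pi * \<bar>real_of_int k\<bar> * \<bar>h\<bar>)\<^sup>2"
          by (intro mult_left_mono power_mono ee_minus_one_upper) auto
        also have "\<dots> = 16 * pi ^ 4 * h\<^sup>2 * ((real_of_int k) ^ 4 * (cmod (fc f k))\<^sup>2)"
          unfolding nck by (simp add: power_mult_distrib power2_abs field_simps)
        also have "\<dots> \<le> 16 * pi ^ 4 * h\<^sup>2 * w k" by (intro mult_left_mono k4) auto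
        finally show ?thesis .
      qed
      then have "(\<Sum>k\<in>F. (cmod (c' k))\<^sup>2) \<le> (\<Sum>k\<in>F. 16 * pi ^ 4 * h\<^sup>2 * w k)" by (rule sum_mono)
      also have "\<dots> \<le> 16 * pi ^ 4 * h\<^sup>2 * W" unfolding sum_distrib_left[symmetric]
        by (intro mult_left_mono wF F) auto
      finally show "(\<Sum>k\<in>F. (cmod (c' k))\<^sup>2) \<le> 16 * pi ^ 4 * W * h\<^sup>2" by (simp add: mult_ac)
    qed
    then show ?thesis unfolding eq .
  qed
  define C where "C = 32 * pi ^ 4 * W / l\<^sup>2 + 2 * l\<^sup>2 * (M1 ^ 2)\<^sup>2"
  have vlip: "integral {0..1} (\<lambda>x. (cmod (v (x + h) - v x))\<^sup>2) \<le> C * h\<^sup>2" for h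
  proof -
    have pt: "(cmod (v (x + h) - v x))\<^sup>2 \<le> 2 / l\<^sup>2 * (cmod (a (x + h) - a x))\<^sup>2 + 2 * l\<^sup>2 * (M1 ^ 2)\<^sup>2 * h\<^sup>2" for x
    proof -
      have vform: "v y = - \<i> / complex_of_real l * (a y * cnj (f y))" for y
      proof -
        have "a y * cnj (f y) = \<i> * complex_of_real l * v y * (f y * cnj (f y))"
          unfolding a_def v_def by (simp add: algebra_simps)
        then have "a y * cnj (f y) = \<i> * complex_of_real l * v y" using fcf[of y] by simp
        moreover have "- \<i> / complex_of_real l * (\<i> * complex_of_real l * v y) = v y"
          using l0 by (simp add: field_simps)
        ultimately show ?thesis by simp
      qed
      have "v (x + h) - v x = - \<i> / complex_of_real l *
          ((a (x + h) - a x) * cnj (f (x + h)) + a x * (cnj (f (x + h)) - cnj (f x)))"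
        unfolding vform by (simp add: algebra_simps)
      then have "cmod (v (x + h) - v x) = cmod (- \<i> / complex_of_real l) *
          cmod ((a (x + h) - a x) * cnj (f (x + h)) + a x * (cnj (f (x + h)) - cnj (f x)))"
        by (simp only: norm_mult)
      also have "cmod (- \<i> / complex_of_real l) = 1 / \<bar>l\<bar>" by (simp add: norm_divide)
      also have "cmod ((a (x + h) - a x) * cnj (f (x + h)) + a x * (cnj (f (x + h)) - cnj (f x)))
          \<le> cmod ((a (x + h) - a x) * cnj (f (x + h))) + cmod (a x * (cnj (f (x + h)) - cnj (f x)))"
        by (rule norm_triangle_ineq)
      also have "cmod ((a (x + h) - a x) * cnj (f (x + h))) = cmod (a (x + h) - a x)"
        by (simp add: norm_mult nf)
      also have "cmod (a x * (cnj (f (x + h)) - cnj (f x))) = cmod (a x) * cmod (f (x + h) - f x)"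
        by (simp add: norm_mult complex_cnj_diff[symmetric] del: complex_cnj_diff)
      finally have "cmod (v (x + h) - v x) \<le> 1 / \<bar>l\<bar> * (cmod (a (x + h) - a x) + cmod (a x) * cmod (f (x + h) - f x))"
        by (simp add: divide_right_mono)
      also have "\<dots> \<le> 1 / \<bar>l\<bar> * (cmod (a (x + h) - a x) + (\<bar>l\<bar> * M1) * (\<bar>l\<bar> * M1 * \<bar>h\<bar>))"
      proof -
        have "cmod (a x) = \<bar>l\<bar> * \<bar>Rd \<alpha> x\<bar>" unfolding a_def using nf by (simp add: norm_mult abs_mult)
        also have "\<dots> \<le> \<bar>l\<bar> * M1" by (intro mult_left_mono Rd_bound[OF irr li]) auto
        finally have A: "cmod (a x) \<le> \<bar>l\<bar> * M1" .
        have "cmod (f (x + h) - f x) \<le> \<bar>l * RR \<alpha> (x + h) - l * RR \<alpha> x\<bar>" unfolding f_def by (rule exp_i_diff)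
        also have "\<dots> = \<bar>l\<bar> * \<bar>RR \<alpha> (x + h) - RR \<alpha> x\<bar>" by (simp add: abs_mult[symmetric] algebra_simps)
        also have "\<dots> \<le> \<bar>l\<bar> * (M1 * \<bar>h\<bar>)" by (intro mult_left_mono RR_lip[OF irr li]) auto
        finally have B: "cmod (f (x + h) - f x) \<le> \<bar>l\<bar> * M1 * \<bar>h\<bar>" by (simp add: mult_ac)
        show ?thesis using A B l0 M1_nonneg[OF irr li]
          by (intro mult_left_mono add_left_mono mult_mono) auto
      qed
      also have "\<dots> = cmod (a (x + h) - a x) / \<bar>l\<bar> + \<bar>l\<bar> * M1 ^ 2 * \<bar>h\<bar>"
        using l0 by (simp add: field_simps power2_eq_square)
      finally have le: "cmod (v (x + h) - v x) \<le> cmod (a (x + h) - a x) / \<bar>l\<bar> + \<bar>l\<bar> * M1 ^ 2 * \<bar>h\<bar>" .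
      have "(cmod (v (x + h) - v x))\<^sup>2 \<le> (cmod (a (x + h) - a x) / \<bar>l\<bar> + \<bar>l\<bar> * M1 ^ 2 * \<bar>h\<bar>)\<^sup>2"
        by (intro power_mono le) auto
      also have "\<dots> \<le> 2 * (cmod (a (x + h) - a x) / \<bar>l\<bar>)\<^sup>2 + 2 * (\<bar>l\<bar> * M1 ^ 2 * \<bar>h\<bar>)\<^sup>2"
        by (rule sq_sum_le)
      also have "\<dots> = 2 / l\<^sup>2 * (cmod (a (x + h) - a x))\<^sup>2 + 2 * l\<^sup>2 * (M1 ^ 2)\<^sup>2 * h\<^sup>2"
        by (simp add: power_divide power_mult_distrib power2_abs)
      finally show ?thesis .
    qed
    have cah: "continuous_on S (\<lambda>x. a (x + h))" for S
      using continuous_on_compose2[OF ca[of UNIV] continuous_on_add[OF continuous_on_id continuous_on_const]] by auto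
    have cvh: "continuous_on S (\<lambda>x. v (x + h))" for S
      using continuous_on_compose2[OF cv[of UNIV] continuous_on_add[OF continuous_on_id continuous_on_const]] by auto
    have ia: "(\<lambda>x. (cmod (a (x + h) - a x))\<^sup>2) integrable_on {0..1}"
      by (intro int01 continuous_intros ca cah)
    have i1: "(\<lambda>x. 2 / l\<^sup>2 * (cmod (a (x + h) - a x))\<^sup>2) integrable_on {0..1}"
      by (intro int01 continuous_intros ca cah)
    have i2: "(\<lambda>x::real. 2 * l\<^sup>2 * (M1 ^ 2)\<^sup>2 * h\<^sup>2) integrable_on {0..1}"
      by (intro int01 continuous_intros)
    have "integral {0..1} (\<lambda>x. (cmod (v (x + h) - v x))\<^sup>2)
        \<le> integral {0..1} (\<lambda>x. 2 / l\<^sup>2 * (cmod (a (x + h) - a x))\<^sup>2 + 2 * l\<^sup>2 * (M1 ^ 2)\<^sup>2 * h\<^sup>2)"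
    proof (rule integral_le)
      show "(\<lambda>x. (cmod (v (x + h) - v x))\<^sup>2) integrable_on {0..1}"
        by (intro int01 continuous_intros cv cvh)
      show "(\<lambda>x. 2 / l\<^sup>2 * (cmod (a (x + h) - a x))\<^sup>2 + 2 * l\<^sup>2 * (M1 ^ 2)\<^sup>2 * h\<^sup>2) integrable_on {0..1}"
        by (intro int01 continuous_intros ca cah)
    qed (rule pt)
    also have "\<dots> = integral {0..1} (\<lambda>x. 2 / l\<^sup>2 * (cmod (a (x + h) - a x))\<^sup>2) + integral {0..1} (\<lambda>x::real. 2 * l\<^sup>2 * (M1 ^ 2)\<^sup>2 * h\<^sup>2)"
      by (rule Henstock_Kurzweil_Integration.integral_add[OF i1 i2])
    also have "\<dots> = 2 / l\<^sup>2 * integral {0..1} (\<lambda>x. (cmod (a (x + h) - a x))\<^sup>2) + 2 * l\<^sup>2 * (M1 ^ 2)\<^sup>2 * h\<^sup>2"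
      by (simp only: integral_mult_right integral_const_real) simp
    also have "\<dots> \<le> 2 / l\<^sup>2 * (16 * pi ^ 4 * W * h\<^sup>2) + 2 * l\<^sup>2 * (M1 ^ 2)\<^sup>2 * h\<^sup>2"
      by (intro add_right_mono mult_left_mono da) auto
    also have "\<dots> = C * h\<^sup>2" unfolding C_def by (simp add: field_simps)
    finally show ?thesis .
  qed
  have bnd: "\<And>F. finite F \<Longrightarrow> (\<Sum>k\<in>F. (real_of_int k)\<^sup>2 * (cmod (fc v k))\<^sup>2) \<le> C / pi\<^sup>2"
    by (rule lip_H1[OF cv pv vlip])
  have Rcd: "(Rc has_vector_derivative v x) (at x)" for x
    unfolding Rc_def[abs_def] v_def by (rule Rc_deriv[OF irr li])
  have fcv: "fc v k = 2 * of_real pi * \<i> * of_int k * fc Rc k" for k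
    by (rule fc_deriv[OF Rcd cv pR])
  show False
  proof (rule qs_sum_unbounded[OF irr li, where c="pi\<^sup>2" and w="\<lambda>k. (real_of_int k)\<^sup>2 * (cmod (fc v k))\<^sup>2"])
    show "0 < pi\<^sup>2" by simp
    show "pi\<^sup>2 \<le> (real_of_int (int (qs \<alpha> j)))\<^sup>2 * (cmod (fc v (int (qs \<alpha> j))))\<^sup>2" for j
    proof -
      define q where "q = real (qs \<alpha> j)"
      have q1: "1 \<le> q" unfolding q_def by (rule qs_pos[OF irr li])
      have "fc Rc (int (qs \<alpha> j)) = complex_of_real (1 / (2 * q\<^sup>2))"
        unfolding Rc_def[abs_def] q_def using fc_RR_qs[OF irr li, of j] by simp
      then have n2: "cmod (fc Rc (int (qs \<alpha> j))) = 1 / (2 * q\<^sup>2)"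
        using q1 by (simp only: norm_of_real) simp
      have "cmod (fc v (int (qs \<alpha> j))) = 2 * pi * q * cmod (fc Rc (int (qs \<alpha> j)))"
        unfolding fcv q_def by (simp add: norm_mult)
      then have "cmod (fc v (int (qs \<alpha> j))) = 2 * pi * q * (1 / (2 * q\<^sup>2))" using n2 by simp
      then have qX: "q * cmod (fc v (int (qs \<alpha> j))) = pi" using q1 by (simp add: field_simps power2_eq_square)
      have "(real_of_int (int (qs \<alpha> j)))\<^sup>2 * (cmod (fc v (int (qs \<alpha> j))))\<^sup>2 = (q * cmod (fc v (int (qs \<alpha> j))))\<^sup>2"
        unfolding q_def by (simp add: power_mult_distrib)
      then show ?thesis using qX by simp
    qed
  qed (auto intro: bnd)
qed

end

theorem lemma5p3:
  fixes \<alpha> :: real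
  assumes "\<alpha> \<notin> \<rat>" and "liouvillean \<alpha>"
  shows "\<exists>Q R :: real \<Rightarrow> real.
           smooth_circle Q \<and> mean_zero Q \<and>
           R \<in> borel_measurable lborel \<and>
           (\<forall>\<xi>. R (\<xi> + \<alpha>) - R \<xi> = Q \<xi>) \<and>
           sobolev 1 (\<lambda>\<xi>. complex_of_real (R \<xi>)) \<and>
           \<not> sobolev 2 (\<lambda>\<xi>. complex_of_real (R \<xi>)) \<and>
           (\<forall>l::real. l \<noteq> 0 \<longrightarrow>
              sobolev 1 (\<lambda>\<xi>. exp (\<i> * complex_of_real (l * R \<xi>))) \<and>
              \<not> sobolev 2 (\<lambda>\<xi>. exp (\<i> * complex_of_real (l * R \<xi>))))"
proof -
  note irr = assms(1) and li = assms(2)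
  have sm: "smooth_circle (DD \<alpha> 0)"
    unfolding smooth_circle_def
    using DD_periodic[OF irr li] DD_deriv[OF irr li] by blast
  have cRR: "continuous_on UNIV (RR \<alpha>)" by (rule RR_cont[OF irr li])
  have DDeq: "DD \<alpha> 0 = (\<lambda>x. RR \<alpha> (x + \<alpha>) - RR \<alpha> x)" by (rule ext) (rule DD0[OF irr li])
  have cD: "continuous_on S (DD \<alpha> 0)" for S
  proof -
    note DDeq
    moreover have "continuous_on S (\<lambda>x. RR \<alpha> (x + \<alpha>) - RR \<alpha> x)"
      by (intro continuous_intros continuous_on_compose2[OF cRR] continuous_on_subset[OF cRR]) auto
    ultimately show ?thesis by simp
  qed
  have mz: "mean_zero (DD \<alpha> 0)"
  proof -
    have si: "set_integrable lborel {0..1} (DD \<alpha> 0)"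
      unfolding set_integrable_def by (rule borel_integrable_compact) (auto intro: cD)
    have "(LINT x:{0..1}|lborel. DD \<alpha> 0 x) = integral {0..1} (DD \<alpha> 0)"
      by (rule set_borel_integral_eq_integral(2)[OF si])
    also have "\<dots> = integral {0..1} (\<lambda>x. RR \<alpha> (x + \<alpha>) - RR \<alpha> x)"
      by (simp only: DDeq)
    also have "\<dots> = integral {0..1} (\<lambda>x. RR \<alpha> (x + \<alpha>)) - integral {0..1} (RR \<alpha>)"
      by (rule integral_diff) (auto intro!: int01 continuous_intros continuous_on_compose2[OF cRR] continuous_on_subset[OF cRR])
    also have "\<dots> = 0" using periodic_shift_integral[OF cRR RR_periodic[OF irr li]] by simp
    finally show ?thesis unfolding mean_zero_def .
  qed
  have meas: "RR \<alpha> \<in> borel_measurable lborel"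
    using borel_measurable_continuous_onI[OF cRR] by simp
  show ?thesis
  proof (rule exI[of _ "DD \<alpha> 0"], rule exI[of _ "RR \<alpha>"], intro conjI allI impI)
    show "smooth_circle (DD \<alpha> 0)" by (rule sm)
    show "mean_zero (DD \<alpha> 0)" by (rule mz)
    show "RR \<alpha> \<in> borel_measurable lborel" by (rule meas)
    show "RR \<alpha> (\<xi> + \<alpha>) - RR \<alpha> \<xi> = DD \<alpha> 0 \<xi>" for \<xi> by (rule DD0[OF irr li, symmetric])
    show "sobolev 1 (\<lambda>\<xi>. complex_of_real (RR \<alpha> \<xi>))" by (rule Rc_sobolev1[OF irr li])
    show "\<not> sobolev 2 (\<lambda>\<xi>. complex_of_real (RR \<alpha> \<xi>))" by (rule Rc_not_sobolev2[OF irr li])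
    show "sobolev 1 (\<lambda>\<xi>. exp (\<i> * complex_of_real (l * RR \<alpha> \<xi>)))" for l by (rule expR_sobolev1[OF irr li])
    show "\<not> sobolev 2 (\<lambda>\<xi>. exp (\<i> * complex_of_real (l * RR \<alpha> \<xi>)))" if "l \<noteq> 0" for l
      by (rule expR_not_sobolev2[OF irr li that])
  qed
qed

end
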